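(* Consider the MTGC algorithm described in the context. Suppose (A1) and (A2) hold. Then for every global round $t$, $$\sum_{e=0}^{E-1}\frac1N\sum_{j=1}^NZ_j^{t,e}\le4L^2Q_t+4L^2\sum_{e=0}^{E-1}\frac1N\sum_{j=1}^N\Theta_j^{t,e}+2\frac EH\sigma^2+\sigma^2.$$
   Context: Setting: $N$ groups; group $j$ has a set $\mathcal C_j$ of $n_j\ge1$ clients, sets pairwise disjoint. Client $i$ has distribution $\mathcal D_i$, stochastic loss $F_i(\boldsymbol x,\xi)$, $F_i(\boldsymbol x)=\mathbb E_{\xi\sim\mathcal D_i}F_i(\boldsymbol x,\xi)$; $f_j=\frac1{n_j}\sum_{i\in\mathcal C_j}F_i$, $f=\frac1N\sum_jf_j$. For client $i$, $j$ denotes its group. (A1): $\|\nabla F_i(\boldsymbol x)-\nabla F_i(\boldsymbol y)\|\le L\|\boldsymbol x-\boldsymbol y\|$ for all $\boldsymbol x,\boldsymbol y,i$. (A2): $\mathbb E_{\xi\sim\mathcal D_i}\nabla F_i(\boldsymbol x,\xi)=\nabla F_i(\boldsymbol x)$ and $\mathbb E_{\xi\sim\mathcal D_i}\|\nabla F_i(\boldsymbol x,\xi)-\nabla F_i(\boldsymbol x)\|^2\le\sigma^2$ for all $\boldsymbol x,i$. MTGC: initial $\bar{\boldsymbol x}^0$, integers $E,H\ge1$, $\gamma>0$; samples $\xi_{i,h}^{t,e}\sim\mathcal D_i$ fresh and independent of the past. $\boldsymbol y_j^0=-\frac1{n_j}\sum_{i\in\mathcal C_j}\nabla F_i(\bar{\boldsymbol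 x}^0,\xi_{i,0}^{0,0})+\frac1N\sum_{j'}\frac1{n_{j'}}\sum_{i\in\mathcal C_{j'}}\nabla F_i(\bar{\boldsymbol x}^0,\xi_{i,0}^{0,0})$. For each $t\ge0$: $\bar{\boldsymbol x}_j^{t,0}=\bar{\boldsymbol x}^t$; $\boldsymbol z_i^{t,0}=-\nabla F_i(\bar{\boldsymbol x}^t,\xi_{i,0}^{t,0})+\frac1{n_j}\sum_{i'\in\mathcal C_j}\nabla F_{i'}(\bar{\boldsymbol x}^t,\xi_{i',0}^{t,0})$; for $e=0,\dots,E-1$: $\boldsymbol x_{i,0}^{t,e}=\bar{\boldsymbol x}_j^{t,e}$, $\boldsymbol x_{i,h+1}^{t,e}=\boldsymbol x_{i,h}^{t,e}-\gamma(\nabla F_i(\boldsymbol x_{i,h}^{t,e},\xi_{i,h}^{t,e})+\boldsymbol z_i^{t,e}+\boldsymbol y_j^t)$ for $h=0,\dots,H-1$, $\bar{\boldsymbol x}_j^{t,e+1}=\frac1{n_j}\sum_{i\in\mathcal C_j}\boldsymbol x_{i,H}^{t,e}$, $\boldsymbol z_i^{t,e+1}=\boldsymbol z_i^{t,e}+\frac1{H\gamma}(\boldsymbol x_{i,H}^{t,e}-\bar{\boldsymbol x}_j^{t,e+1})$; then $\bar{\boldsymbol x}^{t+1}=\frac1N\sum_j\bar{\boldsymbol x}_j^{t,E}$, $\boldsymbol y_j^{t+1}=\boldsymbol y_j^t+\frac1{HE\gamma}(\bar{\boldsymbol x}_j^{t,E}-\bar{\boldsymbol x}^{t+1})$. $\mathbb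 E$ is over all randomness. Notation: $Z_j^{t,e}=\frac1{n_j}\sum_{i\in\mathcal C_j}\mathbb E\|\boldsymbol z_i^{t,e}+\nabla F_i(\bar{\boldsymbol x}_j^{t,e})-\nabla f_j(\bar{\boldsymbol x}_j^{t,e})\|^2$; $\Theta_j^{t,e}=\mathbb E\|\bar{\boldsymbol x}_j^{t,e+1}-\bar{\boldsymbol x}_j^{t,e}\|^2$; $Q_t=\sum_{e=0}^{E-1}\frac1{NH}\sum_j\frac1{n_j}\sum_{i\in\mathcal C_j}\sum_{h=0}^{H-1}\mathbb E\|\bar{\boldsymbol x}_j^{t,e}-\boldsymbol x_{i,h}^{t,e}\|^2$. *)

theory Defs
  imports "HOL-Probability.Probability"
begin

text \<open>Expected squared norm of a random vector, as an extended nonnegative real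
  (always defined; no integrability side conditions needed).\<close>
definition sqE :: "'w measure \<Rightarrow> ('w \<Rightarrow> 'a::real_normed_vector) \<Rightarrow> ennreal" where
  "sqE M X = (\<integral>\<^sup>+ \<omega>. ennreal ((norm (X \<omega>))\<^sup>2) \<partial>M)"

end

theory Submission
  imports Defs
begin


lemma (in prob_space) indep_var_vimage:
  assumes ind: "indep_var S X T Y" and Xs: "X \<in> space M \<rightarrow> space S"
  shows "indep_var (vimage_algebra (space M) X S) (\<lambda>\<omega>. \<omega>) T Y"
proof -
  have rvX: "random_variable S X" and rvY: "random_variable T Y"
    using ind by (blast dest: indep_var_rv1 indep_var_rv2)+
  have rvid: "(\<lambda>\<omega>. \<omega>) \<in> measurable M (vimage_algebra (space M) X S)"
    by (rule measurable_vimage_algebra2) (auto intro: rvX)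
  have eq: "{(\<lambda>\<omega>. \<omega>) -` A \<inter> space M | A. A \<in> sets (vimage_algebra (space M) X S)}
      = {X -` A \<inter> space M | A. A \<in> sets S}"
    using Xs by (auto simp: sets_vimage_algebra2)
  have fam: "(\<lambda>b. {(case b of True \<Rightarrow> (\<lambda>\<omega>. \<omega>) | False \<Rightarrow> Y) -` A \<inter> space M | A.
        A \<in> sets (case b of True \<Rightarrow> vimage_algebra (space M) X S | False \<Rightarrow> T)})
      = (\<lambda>b. {(case b of True \<Rightarrow> X | False \<Rightarrow> Y) -` A \<inter> space M | A.
        A \<in> sets (case b of True \<Rightarrow> S | False \<Rightarrow> T)})"
    using eq by (auto simp: fun_eq_iff split: bool.split)
  show ?thesis
    using ind rvid rvY unfolding indep_var_def indep_vars_def2 fam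
    by (auto split: bool.split)
qed

lemma (in prob_space) joint_distr_prod:
  assumes X: "X \<in> measurable M S" and Y: "Y \<in> measurable M T"
    and ind: "\<And>A B. A \<in> sets S \<Longrightarrow> B \<in> sets T \<Longrightarrow>
      prob ((\<lambda>x. (X x, Y x)) -` (A \<times> B) \<inter> space M) = prob (X -` A \<inter> space M) * prob (Y -` B \<inter> space M)"
  shows "distr M S X \<Otimes>\<^sub>M distr M T Y = distr M (S \<Otimes>\<^sub>M T) (\<lambda>x. (X x, Y x))"
proof -
  have XY: "random_variable (S \<Otimes>\<^sub>M T) (\<lambda>x. (X x, Y x))"
    using X Y by (rule measurable_Pair)
  interpret X: prob_space "distr M S X" by (rule prob_space_distr) fact
  interpret Y: prob_space "distr M T Y" by (rule prob_space_distr) fact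
  interpret XY: pair_prob_space "distr M S X" "distr M T Y" ..
  show ?thesis
  proof (rule pair_measure_eqI)
    show "sigma_finite_measure (distr M S X)" ..
    show "sigma_finite_measure (distr M T Y)" ..
    fix A B assume A: "A \<in> sets (distr M S X)" and B: "B \<in> sets (distr M T Y)"
    have "emeasure (distr M (S \<Otimes>\<^sub>M T) (\<lambda>x. (X x, Y x))) (A \<times> B) = emeasure M ((\<lambda>x. (X x, Y x)) -` (A \<times> B) \<inter> space M)"
      using A B by (intro emeasure_distr[OF XY]) auto
    also have "\<dots> = emeasure M (X -` A \<inter> space M) * emeasure M (Y -` B \<inter> space M)"
      using ind[of A B] A B
      by (simp add: emeasure_eq_measure measure_nonneg ennreal_mult)
    also have "\<dots> = emeasure (distr M S X) A * emeasure (distr M T Y) B"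
      using X Y A B by (simp add: emeasure_distr)
    finally show "emeasure (distr M S X) A * emeasure (distr M T Y) B = emeasure (distr M (S \<Otimes>\<^sub>M T) (\<lambda>x. (X x, Y x))) (A \<times> B)" by simp
  qed simp
qed

lemma sq_sum_le2: fixes a b :: real shows "(a + b)\<^sup>2 \<le> 2 * a\<^sup>2 + 2 * b\<^sup>2"
proof -
  have "0 \<le> (a - b)\<^sup>2" by simp
  then show ?thesis by (simp add: power2_diff power2_sum)
qed

lemma norm_add_sq_le: fixes u v :: "'a::real_normed_vector"
  shows "(norm (u + v))\<^sup>2 \<le> 2 * (norm u)\<^sup>2 + 2 * (norm v)\<^sup>2"
proof -
  have "(norm (u + v))\<^sup>2 \<le> (norm u + norm v)\<^sup>2"
    by (intro power_mono norm_triangle_ineq) simp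
  also have "\<dots> \<le> 2 * (norm u)\<^sup>2 + 2 * (norm v)\<^sup>2" by (rule sq_sum_le2)
  finally show ?thesis .
qed

lemma norm3_sq_le: fixes a b c :: "'a::real_normed_vector"
  shows "(norm (a + b + c))\<^sup>2 \<le> 2 * (norm a)\<^sup>2 + 4 * (norm b)\<^sup>2 + 4 * (norm c)\<^sup>2"
proof -
  have "(norm (a + (b + c)))\<^sup>2 \<le> 2 * (norm a)\<^sup>2 + 2 * (norm (b + c))\<^sup>2" by (rule norm_add_sq_le)
  also have "(norm (b + c))\<^sup>2 \<le> 2 * (norm b)\<^sup>2 + 2 * (norm c)\<^sup>2" by (rule norm_add_sq_le)
  finally show ?thesis by (simp add: add.assoc)
qed

lemma avg_sq_le: fixes w :: "nat \<Rightarrow> 'a::real_normed_vector"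
  assumes H: "H > 0"
  shows "(norm ((1 / real H) *\<^sub>R (\<Sum>h<H. w h)))\<^sup>2 \<le> (1 / real H) * (\<Sum>h<H. (norm (w h))\<^sup>2)"
proof -
  have "(norm (\<Sum>h<H. w h))\<^sup>2 \<le> (\<Sum>h<H. norm (w h))\<^sup>2"
    by (intro power_mono norm_sum) simp
  also have "\<dots> \<le> (\<Sum>h<H. (norm (w h))\<^sup>2) * real H"
    using sum_squared_le_sum_of_squares[of "\<lambda>h. norm (w h)" "{..<H}"] by simp
  finally have *: "(norm (\<Sum>h<H. w h))\<^sup>2 \<le> (\<Sum>h<H. (norm (w h))\<^sup>2) * real H" .
  have "(norm ((1 / real H) *\<^sub>R (\<Sum>h<H. w h)))\<^sup>2 = (1 / real H)\<^sup>2 * (norm (\<Sum>h<H. w h))\<^sup>2"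
    by (simp add: power2_eq_square field_simps)
  also have "\<dots> \<le> (1 / real H)\<^sup>2 * ((\<Sum>h<H. (norm (w h))\<^sup>2) * real H)"
    by (intro mult_left_mono *) simp
  also have "\<dots> = (1 / real H) * (\<Sum>h<H. (norm (w h))\<^sup>2)"
    using H by (simp add: power2_eq_square field_simps)
  finally show ?thesis .
qed

lemma dev_sum_le: fixes b :: "'i \<Rightarrow> 'a::real_inner"
  assumes A: "finite A" "A \<noteq> {}"
  shows "(\<Sum>i\<in>A. (norm (b i - (1 / real (card A)) *\<^sub>R (\<Sum>i'\<in>A. b i')))\<^sup>2) \<le> (\<Sum>i\<in>A. (norm (b i))\<^sup>2)"
proof -
  define c where "c = real (card A)"
  have c: "c > 0" using A by (simp add: c_def card_gt_0_iff)
  define m where "m = (1 / c) *\<^sub>R (\<Sum>i'\<in>A. b i')"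
  have sb: "(\<Sum>i'\<in>A. b i') = c *\<^sub>R m" using c by (simp add: m_def)
  have eq: "\<And>i. (norm (b i - m))\<^sup>2 = (norm (b i))\<^sup>2 - 2 * (b i \<bullet> m) + m \<bullet> m"
    by (simp add: power2_norm_eq_inner inner_diff_left inner_diff_right inner_commute)
  have "(\<Sum>i\<in>A. (norm (b i - m))\<^sup>2) = (\<Sum>i\<in>A. (norm (b i))\<^sup>2) - 2 * ((\<Sum>i\<in>A. b i) \<bullet> m) + c * (m \<bullet> m)"
    unfolding eq by (simp add: sum.distrib sum_subtractf inner_sum_left sum_distrib_left c_def)
  also have "\<dots> = (\<Sum>i\<in>A. (norm (b i))\<^sup>2) - c * (m \<bullet> m)"
    unfolding sb by simp
  also have "\<dots> \<le> (\<Sum>i\<in>A. (norm (b i))\<^sup>2)" using c by simp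
  finally show ?thesis by (simp add: m_def c_def)
qed

lemma z_alg: fixes xH S z :: "'i \<Rightarrow> 'a::real_vector"
  assumes A: "finite A" "A \<noteq> {}" and i: "i \<in> A" and H: "H > 0" and g: "\<gamma> \<noteq> 0"
    and xH: "\<And>i. i \<in> A \<Longrightarrow> xH i = xg - \<gamma> *\<^sub>R (S i + real H *\<^sub>R z i + real H *\<^sub>R yv)"
    and zs: "(\<Sum>i\<in>A. z i) = 0"
  shows "z i + (1 / (real H * \<gamma>)) *\<^sub>R (xH i - (1 / real (card A)) *\<^sub>R (\<Sum>i\<in>A. xH i))
     = - ((1 / real H) *\<^sub>R (S i - (1 / real (card A)) *\<^sub>R (\<Sum>i\<in>A. S i)))"
proof -
  define c where "c = real (card A)"
  have c: "c > 0" using A by (simp add: c_def card_gt_0_iff)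
  have "(\<Sum>i\<in>A. xH i) = (\<Sum>i\<in>A. xg - \<gamma> *\<^sub>R (S i + real H *\<^sub>R z i + real H *\<^sub>R yv))"
    using xH by simp
  also have "\<dots> = (\<Sum>i\<in>A. xg) - \<gamma> *\<^sub>R (\<Sum>i\<in>A. S i + real H *\<^sub>R z i + real H *\<^sub>R yv)"
    by (simp only: sum_subtractf scaleR_sum_right)
  also have "(\<Sum>i\<in>A. S i + real H *\<^sub>R z i + real H *\<^sub>R yv) = (\<Sum>i\<in>A. S i) + real H *\<^sub>R (\<Sum>i\<in>A. z i) + (c * real H) *\<^sub>R yv"
  proof -
    have "(\<Sum>i\<in>A. real H *\<^sub>R yv) = (c * real H) *\<^sub>R yv" by (simp add: c_def sum_constant_scaleR)
    then show ?thesis by (simp add: sum.distrib scaleR_sum_right)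
  qed
  also have "(\<Sum>i\<in>A. xg) = c *\<^sub>R xg" by (simp add: c_def sum_constant_scaleR)
  finally have sxH: "(\<Sum>i\<in>A. xH i) = c *\<^sub>R xg - \<gamma> *\<^sub>R ((\<Sum>i\<in>A. S i) + (c * real H) *\<^sub>R yv)"
    using zs by simp
  have sx: "(1 / c) *\<^sub>R (\<Sum>i\<in>A. xH i) = xg - \<gamma> *\<^sub>R ((1 / c) *\<^sub>R (\<Sum>i\<in>A. S i) + real H *\<^sub>R yv)"
    unfolding sxH using c by (simp add: scaleR_right_diff_distrib scaleR_right_distrib)
  have "xH i - (1 / c) *\<^sub>R (\<Sum>i\<in>A. xH i) = - \<gamma> *\<^sub>R (S i + real H *\<^sub>R z i - (1 / c) *\<^sub>R (\<Sum>i\<in>A. S i))"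
    unfolding sx xH[OF i] by (simp add: algebra_simps)
  then have "z i + (1 / (real H * \<gamma>)) *\<^sub>R (xH i - (1 / c) *\<^sub>R (\<Sum>i\<in>A. xH i))
      = z i + (1 / (real H * \<gamma>)) *\<^sub>R (- \<gamma> *\<^sub>R (S i + real H *\<^sub>R z i - (1 / c) *\<^sub>R (\<Sum>i\<in>A. S i)))"
    by simp
  also have "\<dots> = - ((1 / real H) *\<^sub>R (S i - (1 / c) *\<^sub>R (\<Sum>i\<in>A. S i)))"
    using H g by (simp add: algebra_simps)
  finally show ?thesis by (simp add: c_def)
qed


lemma combine:
  fixes Aq Qj Th :: "nat \<Rightarrow> nat \<Rightarrow> ennreal" and cc :: "nat \<Rightarrow> real" and N E H :: nat
    and L \<sigma> :: real
  assumes N: "N \<ge> 1" and E: "E \<ge> 1" and H: "H \<ge> 1" and cpos: "\<And>j. j < N \<Longrightarrow> cc j > 0"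
    and B0: "\<And>j. j < N \<Longrightarrow> Aq 0 j \<le> ennreal (cc j * \<sigma>\<^sup>2)"
    and B1: "\<And>j e. j < N \<Longrightarrow> Suc e < E \<Longrightarrow> Aq (Suc e) j \<le> ennreal (2 * cc j / real H * \<sigma>\<^sup>2)
        + ennreal (4 * L\<^sup>2 / real H) * Qj e j + ennreal (4 * L\<^sup>2 * cc j) * Th e j"
  shows "(\<Sum>e<E. ennreal (1 / real N) * (\<Sum>j<N. ennreal (1 / cc j) * Aq e j))
    \<le> ennreal (4 * L\<^sup>2) * (\<Sum>e<E. ennreal (1 / (real N * real H)) * (\<Sum>j<N. ennreal (1 / cc j) * Qj e j))
      + ennreal (4 * L\<^sup>2) * (\<Sum>e<E. ennreal (1 / real N) * (\<Sum>j<N. Th e j))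
      + ennreal (2 * (real E / real H) * \<sigma>\<^sup>2) + ennreal (\<sigma>\<^sup>2)"
proof -
  define q where "q e = ennreal (1 / (real N * real H)) * (\<Sum>j<N. ennreal (1 / cc j) * Qj e j)" for e
  define th where "th e = ennreal (1 / real N) * (\<Sum>j<N. Th e j)" for e
  define a where "a e = ennreal (1 / real N) * (\<Sum>j<N. ennreal (1 / cc j) * Aq e j)" for e
  have NH: "ennreal (1 / (real N * real H)) = ennreal (1 / real N) * ennreal (1 / real H)"
    by (simp add: ennreal_mult[symmetric])
  have a0: "a 0 \<le> ennreal (\<sigma>\<^sup>2)"
  proof -
    have "(\<Sum>j<N. ennreal (1 / cc j) * Aq 0 j) \<le> (\<Sum>j<N. ennreal (\<sigma>\<^sup>2))"
    proof (rule sum_mono)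
      fix j assume "j \<in> {..<N}"
      then have j: "j < N" by simp
      have "ennreal (1 / cc j) * Aq 0 j \<le> ennreal (1 / cc j) * ennreal (cc j * \<sigma>\<^sup>2)"
        by (rule mult_left_mono[OF B0[OF j]]) simp
      also have "\<dots> = ennreal (\<sigma>\<^sup>2)"
        using cpos[OF j] by (simp add: ennreal_mult[symmetric])
      finally show "ennreal (1 / cc j) * Aq 0 j \<le> ennreal (\<sigma>\<^sup>2)" .
    qed
    also have "\<dots> = ennreal (real N * \<sigma>\<^sup>2)" by (simp add: ennreal_mult ennreal_of_nat_eq_real_of_nat)
    finally have "a 0 \<le> ennreal (1 / real N) * ennreal (real N * \<sigma>\<^sup>2)"
      unfolding a_def by (rule mult_left_mono) simp
    also have "\<dots> = ennreal (\<sigma>\<^sup>2)" using N by (simp add: ennreal_mult[symmetric])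
    finally show ?thesis .
  qed
  have aS: "a (Suc e) \<le> ennreal (2 / real H * \<sigma>\<^sup>2) + ennreal (4 * L\<^sup>2) * q e + ennreal (4 * L\<^sup>2) * th e"
    if e: "Suc e < E" for e
  proof -
    have "(\<Sum>j<N. ennreal (1 / cc j) * Aq (Suc e) j) \<le> (\<Sum>j<N. ennreal (2 / real H * \<sigma>\<^sup>2)
        + ennreal (4 * L\<^sup>2) * (ennreal (1 / real H) * (ennreal (1 / cc j) * Qj e j)) + ennreal (4 * L\<^sup>2) * Th e j)"
    proof (rule sum_mono)
      fix j assume "j \<in> {..<N}"
      then have j: "j < N" by simp
      have c: "cc j > 0" by (rule cpos[OF j])
      have "ennreal (1 / cc j) * Aq (Suc e) j \<le> ennreal (1 / cc j) * (ennreal (2 * cc j / real H * \<sigma>\<^sup>2)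
        + ennreal (4 * L\<^sup>2 / real H) * Qj e j + ennreal (4 * L\<^sup>2 * cc j) * Th e j)"
        by (rule mult_left_mono[OF B1[OF j e]]) simp
      also have "\<dots> = ennreal (1 / cc j) * ennreal (2 * cc j / real H * \<sigma>\<^sup>2)
        + (ennreal (1 / cc j) * ennreal (4 * L\<^sup>2 / real H)) * Qj e j + (ennreal (1 / cc j) * ennreal (4 * L\<^sup>2 * cc j)) * Th e j"
        by (simp add: distrib_left mult.assoc)
      also have "ennreal (1 / cc j) * ennreal (2 * cc j / real H * \<sigma>\<^sup>2) = ennreal (2 / real H * \<sigma>\<^sup>2)"
        using c by (simp add: ennreal_mult[symmetric])
      also have "ennreal (1 / cc j) * ennreal (4 * L\<^sup>2 / real H) = ennreal (4 * L\<^sup>2) * (ennreal (1 / real H) * ennreal (1 / cc j))"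
        using c by (simp add: ennreal_mult[symmetric] mult.commute)
      also have "ennreal (1 / cc j) * ennreal (4 * L\<^sup>2 * cc j) = ennreal (4 * L\<^sup>2)"
        using c by (simp add: ennreal_mult[symmetric])
      finally show "ennreal (1 / cc j) * Aq (Suc e) j \<le> ennreal (2 / real H * \<sigma>\<^sup>2)
        + ennreal (4 * L\<^sup>2) * (ennreal (1 / real H) * (ennreal (1 / cc j) * Qj e j)) + ennreal (4 * L\<^sup>2) * Th e j"
        by (simp add: mult.assoc)
    qed
    also have "\<dots> = of_nat N * ennreal (2 / real H * \<sigma>\<^sup>2)
        + ennreal (4 * L\<^sup>2) * (ennreal (1 / real H) * (\<Sum>j<N. ennreal (1 / cc j) * Qj e j)) + ennreal (4 * L\<^sup>2) * (\<Sum>j<N. Th e j)"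
      by (simp add: sum.distrib sum_distrib_left)
    finally have "a (Suc e) \<le> ennreal (1 / real N) * (of_nat N * ennreal (2 / real H * \<sigma>\<^sup>2)
        + ennreal (4 * L\<^sup>2) * (ennreal (1 / real H) * (\<Sum>j<N. ennreal (1 / cc j) * Qj e j)) + ennreal (4 * L\<^sup>2) * (\<Sum>j<N. Th e j))"
      unfolding a_def by (rule mult_left_mono) simp
    also have "\<dots> = (ennreal (1 / real N) * of_nat N) * ennreal (2 / real H * \<sigma>\<^sup>2)
        + ennreal (4 * L\<^sup>2) * q e + ennreal (4 * L\<^sup>2) * th e"
      unfolding q_def th_def NH by (simp add: distrib_left ac_simps)
    also have "ennreal (1 / real N) * of_nat N = 1"
      using N by (simp add: ennreal_of_nat_eq_real_of_nat ennreal_mult[symmetric])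
    finally show ?thesis by simp
  qed
  obtain E' where E': "E = Suc E'" using E by (cases E) auto
  have "(\<Sum>e<E. a e) = a 0 + (\<Sum>e<E'. a (Suc e))"
    unfolding E' by (rule sum.lessThan_Suc_shift)
  also have "\<dots> \<le> ennreal (\<sigma>\<^sup>2) + (\<Sum>e<E'. ennreal (2 / real H * \<sigma>\<^sup>2) + ennreal (4 * L\<^sup>2) * q e + ennreal (4 * L\<^sup>2) * th e)"
    using a0 aS E' by (intro add_mono sum_mono) auto
  also have "\<dots> = ennreal (\<sigma>\<^sup>2) + of_nat E' * ennreal (2 / real H * \<sigma>\<^sup>2)
      + ennreal (4 * L\<^sup>2) * (\<Sum>e<E'. q e) + ennreal (4 * L\<^sup>2) * (\<Sum>e<E'. th e)"
    by (simp add: sum.distrib sum_distrib_left add.assoc)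
  also have "\<dots> \<le> ennreal (\<sigma>\<^sup>2) + ennreal (2 * (real E / real H) * \<sigma>\<^sup>2)
      + ennreal (4 * L\<^sup>2) * (\<Sum>e<E. q e) + ennreal (4 * L\<^sup>2) * (\<Sum>e<E. th e)"
  proof -
    have "of_nat E' * ennreal (2 / real H * \<sigma>\<^sup>2) = ennreal (real E' * (2 / real H * \<sigma>\<^sup>2))"
      by (subst ennreal_mult) (auto simp: ennreal_of_nat_eq_real_of_nat)
    also have "\<dots> \<le> ennreal (real E * (2 / real H * \<sigma>\<^sup>2))"
      using E' by (intro ennreal_leI mult_right_mono) auto
    also have "real E * (2 / real H * \<sigma>\<^sup>2) = 2 * (real E / real H) * \<sigma>\<^sup>2" by simp
    finally have 1: "of_nat E' * ennreal (2 / real H * \<sigma>\<^sup>2) \<le> ennreal (2 * (real E / real H) * \<sigma>\<^sup>2)" .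
    have 2: "(\<Sum>e<E'. q e) \<le> (\<Sum>e<E. q e)" unfolding E' by (simp add: sum.lessThan_Suc)
    have 3: "(\<Sum>e<E'. th e) \<le> (\<Sum>e<E. th e)" unfolding E' by (simp add: sum.lessThan_Suc)
    show ?thesis using 1 2 3 by (intro add_mono mult_left_mono) auto
  qed
  finally show ?thesis unfolding a_def q_def th_def by (simp add: ac_simps)
qed

lemma b_split: fixes Gh fh :: "nat \<Rightarrow> 'a::real_vector"
  assumes H: "H > 0"
  shows "(1 / real H) *\<^sub>R (\<Sum>h<H. Gh h) - v = (1 / real H) *\<^sub>R (\<Sum>h<H. Gh h - fh h)
     + (1 / real H) *\<^sub>R (\<Sum>h<H. fh h - u) + (u - v)"
proof -
  have "(1 / real H) *\<^sub>R (\<Sum>h<H. Gh h - fh h) + (1 / real H) *\<^sub>R (\<Sum>h<H. fh h - u)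
      = (1 / real H) *\<^sub>R ((\<Sum>h<H. Gh h) - real H *\<^sub>R u)"
    by (simp add: sum_subtractf sum_constant_scaleR flip: scaleR_right_distrib)
  also have "\<dots> = (1 / real H) *\<^sub>R (\<Sum>h<H. Gh h) - u"
    using H by (simp add: scaleR_right_diff_distrib)
  finally show ?thesis by simp
qed

lemma avg_identity0: fixes Gv g :: "'i \<Rightarrow> 'a::real_vector"
  shows "- Gv i + (1 / c) *\<^sub>R (\<Sum>i'\<in>A. Gv i') + g i - (1 / c) *\<^sub>R (\<Sum>i'\<in>A. g i')
    = - ((Gv i - g i) - (1 / c) *\<^sub>R (\<Sum>i'\<in>A. Gv i' - g i'))"
  by (simp add: sum_subtractf scaleR_right_diff_distrib algebra_simps)

lemma avg_identity: fixes S g :: "'i \<Rightarrow> 'a::real_vector"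
  shows "- ((1 / hh) *\<^sub>R (S i - (1 / c) *\<^sub>R (\<Sum>i'\<in>A. S i'))) + g i - (1 / c) *\<^sub>R (\<Sum>i'\<in>A. g i')
    = - (((1 / hh) *\<^sub>R S i - g i) - (1 / c) *\<^sub>R (\<Sum>i'\<in>A. (1 / hh) *\<^sub>R S i' - g i'))"
  by (simp add: sum_subtractf scaleR_right_diff_distrib algebra_simps flip: scaleR_sum_right)


locale mtgc =
  fixes N :: nat and C :: "nat \<Rightarrow> nat set"
    and D :: "nat \<Rightarrow> 's measure"
    and G :: "nat \<Rightarrow> 'a::euclidean_space \<Rightarrow> 's \<Rightarrow> 'a"
    and gF :: "nat \<Rightarrow> 'a \<Rightarrow> 'a"
    and L \<sigma> \<gamma> :: real and E H :: nat
    and M :: "'w measure"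
    and \<xi> :: "nat \<Rightarrow> nat \<Rightarrow> nat \<Rightarrow> nat \<Rightarrow> 'w \<Rightarrow> 's"
    and x0 :: 'a
    and xbar :: "nat \<Rightarrow> 'w \<Rightarrow> 'a"
    and y :: "nat \<Rightarrow> nat \<Rightarrow> 'w \<Rightarrow> 'a"
    and xg :: "nat \<Rightarrow> nat \<Rightarrow> nat \<Rightarrow> 'w \<Rightarrow> 'a"
    and z :: "nat \<Rightarrow> nat \<Rightarrow> nat \<Rightarrow> 'w \<Rightarrow> 'a"
    and x :: "nat \<Rightarrow> nat \<Rightarrow> nat \<Rightarrow> nat \<Rightarrow> 'w \<Rightarrow> 'a"
  assumes N_pos: "N \<ge> 1"
    and C_fin: "\<And>j. j < N \<Longrightarrow> finite (C j)"
    and C_ne: "\<And>j. j < N \<Longrightarrow> C j \<noteq> {}"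
    and D_prob: "\<And>j i. j < N \<Longrightarrow> i \<in> C j \<Longrightarrow> prob_space (D i)"
    and G_meas: "\<And>j i. j < N \<Longrightarrow> i \<in> C j \<Longrightarrow>
        (\<lambda>(v, s). G i v s) \<in> borel_measurable (borel \<Otimes>\<^sub>M D i)"
    and A1: "\<And>j i u v. j < N \<Longrightarrow> i \<in> C j \<Longrightarrow> norm (gF i u - gF i v) \<le> L * norm (u - v)"
    and A2_int: "\<And>j i v. j < N \<Longrightarrow> i \<in> C j \<Longrightarrow> integrable (D i) (G i v)"
    and A2_unb: "\<And>j i v. j < N \<Longrightarrow> i \<in> C j \<Longrightarrow> (\<integral>s. G i v s \<partial>D i) = gF i v"
    and A2_var: "\<And>j i v. j < N \<Longrightarrow> i \<in> C j \<Longrightarrow>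
        (\<integral>\<^sup>+ s. ennreal ((norm (G i v s - gF i v))\<^sup>2) \<partial>D i) \<le> ennreal (\<sigma>\<^sup>2)"
    and E_pos: "E \<ge> 1" and H_pos: "H \<ge> 1" and \<gamma>_pos: "\<gamma> > 0"
    and M_prob: "prob_space M"
    and \<xi>_indep: "prob_space.indep_vars M (\<lambda>(i, tt, e, h). D i) (\<lambda>(i, tt, e, h). \<xi> i tt e h)
        {(i, tt, e, h). i \<in> (\<Union>j<N. C j) \<and> e < E \<and> h < H}"
    and \<xi>_distr: "\<And>j i tt e h. j < N \<Longrightarrow> i \<in> C j \<Longrightarrow> e < E \<Longrightarrow> h < H \<Longrightarrow>
        distr M (D i) (\<xi> i tt e h) = D i"
    and y_init: "\<And>j \<omega>. j < N \<Longrightarrow> y j 0 \<omega> =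
        - ((1 / real (card (C j))) *\<^sub>R (\<Sum>i\<in>C j. G i x0 (\<xi> i 0 0 0 \<omega>)))
        + (1 / real N) *\<^sub>R (\<Sum>j'<N. (1 / real (card (C j'))) *\<^sub>R (\<Sum>i\<in>C j'. G i x0 (\<xi> i 0 0 0 \<omega>)))"
    and xbar_init: "\<And>\<omega>. xbar 0 \<omega> = x0"
    and xg_0: "\<And>j tt \<omega>. j < N \<Longrightarrow> xg j tt 0 \<omega> = xbar tt \<omega>"
    and z_0: "\<And>j i tt \<omega>. j < N \<Longrightarrow> i \<in> C j \<Longrightarrow> z i tt 0 \<omega> =
        - G i (xbar tt \<omega>) (\<xi> i tt 0 0 \<omega>)
        + (1 / real (card (C j))) *\<^sub>R (\<Sum>i'\<in>C j. G i' (xbar tt \<omega>) (\<xi> i' tt 0 0 \<omega>))"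
    and x_0: "\<And>j i tt e \<omega>. j < N \<Longrightarrow> i \<in> C j \<Longrightarrow> e < E \<Longrightarrow> x i tt e 0 \<omega> = xg j tt e \<omega>"
    and x_step: "\<And>j i tt e h \<omega>. j < N \<Longrightarrow> i \<in> C j \<Longrightarrow> e < E \<Longrightarrow> h < H \<Longrightarrow>
        x i tt e (Suc h) \<omega> = x i tt e h \<omega>
          - \<gamma> *\<^sub>R (G i (x i tt e h \<omega>) (\<xi> i tt e h \<omega>) + z i tt e \<omega> + y j tt \<omega>)"
    and xg_step: "\<And>j tt e \<omega>. j < N \<Longrightarrow> e < E \<Longrightarrow>
        xg j tt (Suc e) \<omega> = (1 / real (card (C j))) *\<^sub>R (\<Sum>i\<in>C j. x i tt e H \<omega>)"
    and z_step: "\<And>j i tt e \<omega>. j < N \<Longrightarrow> i \<in> C j \<Longrightarrow> e < E \<Longrightarrow>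
        z i tt (Suc e) \<omega> = z i tt e \<omega> + (1 / (real H * \<gamma>)) *\<^sub>R (x i tt e H \<omega> - xg j tt (Suc e) \<omega>)"
    and xbar_step: "\<And>tt \<omega>. xbar (Suc tt) \<omega> = (1 / real N) *\<^sub>R (\<Sum>j<N. xg j tt E \<omega>)"
    and y_step: "\<And>j tt \<omega>. j < N \<Longrightarrow>
        y j (Suc tt) \<omega> = y j tt \<omega> + (1 / (real H * real E * \<gamma>)) *\<^sub>R (xg j tt E \<omega> - xbar (Suc tt) \<omega>)"
begin

sublocale P: prob_space M by (rule M_prob)

definition "II = {(i, tt, e, h). i \<in> (\<Union>j<N. C j) \<and> e < E \<and> h < H}"
definition Tm :: "nat \<Rightarrow> nat \<Rightarrow> nat \<Rightarrow> nat" where "Tm tt e h = (tt * E + e) * (H + 1) + h"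
definition "KK n = {k \<in> II. (case k of (i, tt, e, h) \<Rightarrow> Tm tt e h < n)}"
abbreviation "XI \<equiv> (\<lambda>(i, tt, e, h). \<xi> i tt e h)"
abbreviation "DI \<equiv> (\<lambda>(i::nat, tt::nat, e::nat, h::nat). D i)"
definition "rho n = (\<lambda>\<omega>. restrict (\<lambda>k. XI k \<omega>) (KK n))"
definition "Fm n = vimage_algebra (space M) (rho n) (PiM (KK n) DI)"

lemma KK_sub: "KK n \<subseteq> II" by (auto simp: KK_def)

lemma XI_meas: "k \<in> II \<Longrightarrow> XI k \<in> measurable M (DI k)"
  using \<xi>_indep unfolding II_def P.indep_vars_def2 by blast

lemma rho_M: "rho n \<in> measurable M (PiM (KK n) DI)"
  unfolding rho_def using KK_sub XI_meas by (intro measurable_restrict) blast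

lemma rho_space: "rho n \<in> space M \<rightarrow> space (PiM (KK n) DI)"
  using rho_M by (auto intro: measurable_space)

lemma space_Fm[simp]: "space (Fm n) = space M"
  by (simp add: Fm_def)

lemma rho_Fm: "rho n \<in> measurable (Fm n) (PiM (KK n) DI)"
  unfolding Fm_def by (rule measurable_vimage_algebra1[OF rho_space])

lemma XI_Fm: "k \<in> KK n \<Longrightarrow> XI k \<in> measurable (Fm n) (DI k)"
proof -
  assume k: "k \<in> KK n"
  have "(\<lambda>\<omega>. rho n \<omega> k) \<in> measurable (Fm n) (DI k)"
    using measurable_compose[OF rho_Fm measurable_component_singleton[OF k]] by simp
  moreover have "(\<lambda>\<omega>. rho n \<omega> k) = XI k" using k by (auto simp: rho_def fun_eq_iff)
  ultimately show ?thesis by simp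
qed

lemma xi_Fm: "j < N \<Longrightarrow> i \<in> C j \<Longrightarrow> e < E \<Longrightarrow> h < H \<Longrightarrow> Tm tt e h < n \<Longrightarrow>
   \<xi> i tt e h \<in> measurable (Fm n) (D i)"
  using XI_Fm[of "(i, tt, e, h)" n] by (auto simp: KK_def II_def)

lemma Fm_mono_id: "n \<le> m \<Longrightarrow> (\<lambda>\<omega>. \<omega>) \<in> measurable (Fm m) (Fm n)"
proof -
  assume nm: "n \<le> m"
  have sub: "KK n \<subseteq> KK m" using nm by (auto simp: KK_def)
  have "rho n \<in> measurable (Fm m) (PiM (KK n) DI)"
    unfolding rho_def using sub XI_Fm by (intro measurable_restrict) blast
  then show ?thesis unfolding Fm_def[of n]
    by (intro measurable_vimage_algebra2) (auto simp: Fm_def)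
qed

lemma Fm_mono: "n \<le> m \<Longrightarrow> f \<in> measurable (Fm n) K \<Longrightarrow> f \<in> measurable (Fm m) K"
  using measurable_compose[OF Fm_mono_id] by auto

lemma Fm_M_id: "(\<lambda>\<omega>. \<omega>) \<in> measurable M (Fm n)"
  unfolding Fm_def by (intro measurable_vimage_algebra2) (auto intro: rho_M)

lemma Fm_M: "f \<in> measurable (Fm n) K \<Longrightarrow> f \<in> measurable M K"
  using measurable_compose[OF Fm_M_id] by auto

lemma indep_Fm:
  assumes k: "k \<in> II" "k \<notin> KK n" and f: "f \<in> measurable (Fm n) K"
    and A: "A \<in> sets K" and B: "B \<in> sets (DI k)"
  shows "P.prob ((\<lambda>\<omega>. (f \<omega>, XI k \<omega>)) -` (A \<times> B) \<inter> space M)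
     = P.prob (f -` A \<inter> space M) * P.prob (XI k -` B \<inter> space M)"
proof -
  let ?r = "\<lambda>\<omega>. restrict (\<lambda>i. XI i \<omega>) (KK n)"
  let ?rk = "\<lambda>\<omega>. restrict (\<lambda>i. XI i \<omega>) {k}"
  have ind: "P.indep_var (PiM (KK n) DI) ?r (PiM {k} DI) ?rk"
    using k KK_sub by (intro P.indep_var_restrict[OF \<xi>_indep[folded II_def]]) auto
  have "f -` A \<inter> space M \<in> sets (Fm n)"
    using measurable_sets[OF f A] by simp
  then obtain A' where A': "A' \<in> sets (PiM (KK n) DI)" "f -` A \<inter> space M = rho n -` A' \<inter> space M"
    unfolding Fm_def sets_vimage_algebra2[OF rho_space] by auto
  define B' where "B' = (\<lambda>g. g k) -` B \<inter> space (PiM {k} DI)"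
  have B': "B' \<in> sets (PiM {k} DI)"
    unfolding B'_def using B by (intro measurable_sets[OF measurable_component_singleton]) auto
  have rkB: "XI k -` B \<inter> space M = ?rk -` B' \<inter> space M"
    using measurable_space[OF XI_meas[OF k(1)]] unfolding B'_def
    by (auto simp: space_PiM PiE_iff split: prod.splits)
  have "(\<lambda>\<omega>. (f \<omega>, XI k \<omega>)) -` (A \<times> B) \<inter> space M = (f -` A \<inter> space M) \<inter> (XI k -` B \<inter> space M)"
    by auto
  also have "\<dots> = (\<lambda>\<omega>. (?r \<omega>, ?rk \<omega>)) -` (A' \<times> B') \<inter> space M"
    using A'(2) rkB unfolding rho_def by auto
  finally have "P.prob ((\<lambda>\<omega>. (f \<omega>, XI k \<omega>)) -` (A \<times> B) \<inter> space M)
      = P.prob (?r -` A' \<inter> space M) * P.prob (?rk -` B' \<inter> space M)"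
    using P.indep_varD[OF ind A'(1) B'] by simp
  then show ?thesis using A'(2) rkB unfolding rho_def by simp
qed

lemma var_bound:
  assumes j: "j < N" "i \<in> C j"
  shows "(\<integral>\<^sup>+ s. ennreal ((norm (a + (G i v s - gF i v)))\<^sup>2) \<partial>D i) \<le> ennreal ((norm a)\<^sup>2) + ennreal (\<sigma>\<^sup>2)"
proof -
  interpret Di: prob_space "D i" using D_prob[OF j] .
  define W where "W s = G i v s - gF i v" for s
  have intG: "integrable (D i) (G i v)" using A2_int[OF j] .
  have intW: "integrable (D i) W" unfolding W_def using intG by auto
  have measW: "W \<in> borel_measurable (D i)" using intW by (rule borel_measurable_integrable)
  have finW: "(\<integral>\<^sup>+ s. ennreal ((norm (W s))\<^sup>2) \<partial>D i) \<le> ennreal (\<sigma>\<^sup>2)"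
    unfolding W_def using A2_var[OF j] .
  have int2: "integrable (D i) (\<lambda>s. (norm (W s))\<^sup>2)"
  proof (rule integrableI_bounded)
    show "(\<lambda>s. (norm (W s))\<^sup>2) \<in> borel_measurable (D i)" using measW by measurable
    show "(\<integral>\<^sup>+ s. ennreal (norm ((norm (W s))\<^sup>2)) \<partial>D i) < \<infinity>"
      using finW by (simp add: order_le_less_trans)
  qed
  have intI: "integrable (D i) (\<lambda>s. a \<bullet> W s)" using intW by auto
  have EW: "(\<integral>s. W s \<partial>D i) = 0"
    unfolding W_def using intG A2_unb[OF j] by (simp add: Di.prob_space)
  have eq: "\<And>s. (norm (a + W s))\<^sup>2 = (norm a)\<^sup>2 + 2 * (a \<bullet> W s) + (norm (W s))\<^sup>2"
    by (simp add: power2_norm_eq_inner inner_add_left inner_add_right inner_commute)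
  have intS: "integrable (D i) (\<lambda>s. (norm a)\<^sup>2 + 2 * (a \<bullet> W s) + (norm (W s))\<^sup>2)"
    using intI int2 by auto
  have "(\<integral>\<^sup>+ s. ennreal ((norm (a + W s))\<^sup>2) \<partial>D i)
      = ennreal (\<integral>s. (norm a)\<^sup>2 + 2 * (a \<bullet> W s) + (norm (W s))\<^sup>2 \<partial>D i)"
    unfolding eq by (rule nn_integral_eq_integral[OF intS]) (auto simp: eq[symmetric])
  also have "(\<integral>s. (norm a)\<^sup>2 + 2 * (a \<bullet> W s) + (norm (W s))\<^sup>2 \<partial>D i)
      = (norm a)\<^sup>2 + (\<integral>s. (norm (W s))\<^sup>2 \<partial>D i)"
    using intI int2 EW intW by (simp add: Di.prob_space)
  also have "ennreal \<dots> = ennreal ((norm a)\<^sup>2) + ennreal (\<integral>s. (norm (W s))\<^sup>2 \<partial>D i)"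
    by (intro ennreal_plus) auto
  also have "ennreal (\<integral>s. (norm (W s))\<^sup>2 \<partial>D i) = (\<integral>\<^sup>+ s. ennreal ((norm (W s))\<^sup>2) \<partial>D i)"
    by (rule nn_integral_eq_integral[OF int2, symmetric]) auto
  finally show ?thesis using finW unfolding W_def
    by (simp add: add_left_mono)
qed


lemma gF_meas:
  assumes j: "j < N" "i \<in> C j"
  shows "gF i \<in> borel_measurable borel"
proof -
  have "\<bar>L\<bar>-lipschitz_on UNIV (gF i)"
  proof (rule lipschitz_onI)
    fix u v :: 'a
    have "norm (gF i u - gF i v) \<le> L * norm (u - v)" by (rule A1[OF j])
    also have "\<dots> \<le> \<bar>L\<bar> * norm (u - v)" by (intro mult_right_mono) auto
    finally show "dist (gF i u) (gF i v) \<le> \<bar>L\<bar> * dist u v" by (simp add: dist_norm)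
  qed simp
  then show ?thesis by (intro borel_measurable_continuous_onI lipschitz_on_continuous_on)
qed

lemma G_comp_meas:
  assumes j: "j < N" "i \<in> C j" and X: "X \<in> measurable K borel" and Y: "Y \<in> measurable K (D i)"
  shows "(\<lambda>\<omega>. G i (X \<omega>) (Y \<omega>)) \<in> borel_measurable K"
  using measurable_compose[OF measurable_Pair[OF X Y] G_meas[OF j]] by simp

lemma noise_step:
  assumes j: "j < N" "i \<in> C j" and eh: "e < E" "h < H"
    and S: "S \<in> borel_measurable (Fm (Tm tt e h))" and X: "X \<in> borel_measurable (Fm (Tm tt e h))"
  shows "(\<integral>\<^sup>+\<omega>. ennreal ((norm (S \<omega> + (G i (X \<omega>) (\<xi> i tt e h \<omega>) - gF i (X \<omega>))))\<^sup>2) \<partial>M)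
     \<le> (\<integral>\<^sup>+\<omega>. ennreal ((norm (S \<omega>))\<^sup>2) \<partial>M) + ennreal (\<sigma>\<^sup>2)"
proof -
  interpret Di: prob_space "D i" using D_prob[OF j] .
  let ?n = "Tm tt e h"
  let ?k = "(i, tt, e, h)"
  have kII: "?k \<in> II" using j eh by (auto simp: II_def)
  have kK: "?k \<notin> KK ?n" by (auto simp: KK_def)
  let ?Pp = "\<lambda>\<omega>. (S \<omega>, X \<omega>)"
  have PpF: "?Pp \<in> measurable (Fm ?n) (borel \<Otimes>\<^sub>M borel)" using S X by (rule measurable_Pair)
  have PpM: "?Pp \<in> measurable M (borel \<Otimes>\<^sub>M borel)" using PpF by (rule Fm_M)
  have xiM: "\<xi> i tt e h \<in> measurable M (D i)" using XI_meas[OF kII] by simp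
  have "distr M (borel \<Otimes>\<^sub>M borel) ?Pp \<Otimes>\<^sub>M distr M (D i) (\<xi> i tt e h)
     = distr M ((borel \<Otimes>\<^sub>M borel) \<Otimes>\<^sub>M D i) (\<lambda>\<omega>. (?Pp \<omega>, \<xi> i tt e h \<omega>))"
  proof (rule P.joint_distr_prod[OF PpM xiM])
    fix A :: "('a \<times> 'a) set" and B :: "'s set"
    assume "A \<in> sets (borel \<Otimes>\<^sub>M borel)" "B \<in> sets (D i)"
    then show "P.prob ((\<lambda>\<omega>. (?Pp \<omega>, \<xi> i tt e h \<omega>)) -` (A \<times> B) \<inter> space M) =
      P.prob (?Pp -` A \<inter> space M) * P.prob (\<xi> i tt e h -` B \<inter> space M)"
      using indep_Fm[OF kII kK PpF, of A B] by simp
  qed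
  then have prodeq: "distr M (borel \<Otimes>\<^sub>M borel) ?Pp \<Otimes>\<^sub>M D i
     = distr M ((borel \<Otimes>\<^sub>M borel) \<Otimes>\<^sub>M D i) (\<lambda>\<omega>. (?Pp \<omega>, \<xi> i tt e h \<omega>))"
    using \<xi>_distr[OF j eh] by simp
  interpret PD: prob_space "distr M (borel \<Otimes>\<^sub>M borel) ?Pp" by (rule P.prob_space_distr[OF PpM])
  define f where "f q = ennreal ((norm (fst (fst q) + (G i (snd (fst q)) (snd q) - gF i (snd (fst q)))))\<^sup>2)"
    for q :: "('a \<times> 'a) \<times> 's"
  have Gq: "(\<lambda>q::('a \<times> 'a) \<times> 's. G i (snd (fst q)) (snd q)) \<in> borel_measurable ((borel \<Otimes>\<^sub>M borel) \<Otimes>\<^sub>M D i)"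
    by (rule G_comp_meas[OF j]) measurable
  have gFm: "gF i \<in> borel_measurable borel" by (rule gF_meas[OF j])
  have fm: "f \<in> borel_measurable ((borel \<Otimes>\<^sub>M borel) \<Otimes>\<^sub>M D i)"
    unfolding f_def using Gq gFm by measurable
  have JM: "(\<lambda>\<omega>. (?Pp \<omega>, \<xi> i tt e h \<omega>)) \<in> measurable M ((borel \<Otimes>\<^sub>M borel) \<Otimes>\<^sub>M D i)"
    using PpM xiM by (rule measurable_Pair)
  have "(\<integral>\<^sup>+\<omega>. ennreal ((norm (S \<omega> + (G i (X \<omega>) (\<xi> i tt e h \<omega>) - gF i (X \<omega>))))\<^sup>2) \<partial>M)
      = (\<integral>\<^sup>+\<omega>. f (?Pp \<omega>, \<xi> i tt e h \<omega>) \<partial>M)" by (simp add: f_def)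
  also have "\<dots> = (\<integral>\<^sup>+q. f q \<partial>distr M ((borel \<Otimes>\<^sub>M borel) \<Otimes>\<^sub>M D i) (\<lambda>\<omega>. (?Pp \<omega>, \<xi> i tt e h \<omega>)))"
    using fm JM by (simp add: nn_integral_distr)
  also have "\<dots> = (\<integral>\<^sup>+q. f q \<partial>(distr M (borel \<Otimes>\<^sub>M borel) ?Pp \<Otimes>\<^sub>M D i))"
    by (simp add: prodeq)
  also have "\<dots> = (\<integral>\<^sup>+p. \<integral>\<^sup>+s. f (p, s) \<partial>D i \<partial>distr M (borel \<Otimes>\<^sub>M borel) ?Pp)"
  proof (rule Di.nn_integral_fst[symmetric])
    have "sets (distr M (borel \<Otimes>\<^sub>M borel) ?Pp \<Otimes>\<^sub>M D i) = sets ((borel \<Otimes>\<^sub>M borel) \<Otimes>\<^sub>M D i)"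
      by (intro sets_pair_measure_cong) auto
    then show "f \<in> borel_measurable (distr M (borel \<Otimes>\<^sub>M borel) ?Pp \<Otimes>\<^sub>M D i)"
      using measurable_cong_sets[OF _ refl] fm by blast
  qed
  also have "\<dots> \<le> (\<integral>\<^sup>+p. ennreal ((norm (fst p))\<^sup>2) + ennreal (\<sigma>\<^sup>2) \<partial>distr M (borel \<Otimes>\<^sub>M borel) ?Pp)"
    by (intro nn_integral_mono) (simp add: f_def var_bound[OF j])
  also have "\<dots> = (\<integral>\<^sup>+p. ennreal ((norm (fst p))\<^sup>2) \<partial>distr M (borel \<Otimes>\<^sub>M borel) ?Pp) + ennreal (\<sigma>\<^sup>2)"
    using PD.emeasure_space_1 by (subst nn_integral_add) auto
  also have "(\<integral>\<^sup>+p. ennreal ((norm (fst p))\<^sup>2) \<partial>distr M (borel \<Otimes>\<^sub>M borel) ?Pp) = (\<integral>\<^sup>+\<omega>. ennreal ((norm (S \<omega>))\<^sup>2) \<partial>M)"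
    using PpM by (subst nn_integral_distr) auto
  finally show ?thesis .
qed

lemma Tm_Suc_h: "Tm tt e (Suc h) = Tm tt e h + 1" by (simp add: Tm_def)
lemma Tm_ge0: "Tm tt 0 0 \<le> Tm tt e h"
  unfolding Tm_def using mult_le_mono1[of "tt*E" "tt*E+e" "H+1"] by simp
lemma Tm_ge0': "Tm tt e 0 \<le> Tm tt e h" by (simp add: Tm_def)
lemma Tm_H: "Tm tt e H \<le> Tm tt (Suc e) 0" by (simp add: Tm_def)
lemma Tm_E: "Tm tt E 0 = Tm (Suc tt) 0 0" by (simp add: Tm_def algebra_simps)
lemma Tm_e_le: "Tm tt e 0 \<le> Tm tt (Suc e) 0" by (simp add: Tm_def)
lemma Tm_tt: "Tm tt 0 0 \<le> Tm (Suc tt) 0 0"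
  unfolding Tm_def using mult_le_mono1[of "tt*E" "Suc tt*E" "H+1"] by simp

lemmas meas_intros = borel_measurable_diff borel_measurable_scaleR borel_measurable_add
  borel_measurable_sum borel_measurable_uminus borel_measurable_const

lemma x_meas:
  assumes j: "j < N" "i \<in> C j" and e: "e < E"
    and xg: "xg j tt e \<in> borel_measurable (Fm (Tm tt e 0))"
    and zz: "z i tt e \<in> borel_measurable (Fm (Tm tt e 0 + 1))"
    and yy: "y j tt \<in> borel_measurable (Fm (Tm tt 0 0 + 1))"
  shows "h \<le> H \<Longrightarrow> x i tt e h \<in> borel_measurable (Fm (Tm tt e h))"
proof (induction h)
  case 0
  have "x i tt e 0 = xg j tt e" by (rule ext) (rule x_0[OF j e])
  then show ?case using xg by simp
next
  case (Suc h)
  then have h: "h < H" by simp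
  have eq: "x i tt e (Suc h) = (\<lambda>\<omega>. x i tt e h \<omega>
          - \<gamma> *\<^sub>R (G i (x i tt e h \<omega>) (\<xi> i tt e h \<omega>) + z i tt e \<omega> + y j tt \<omega>))"
    by (rule ext) (rule x_step[OF j e h])
  let ?n = "Tm tt e h + 1"
  have xh0: "x i tt e h \<in> borel_measurable (Fm (Tm tt e h))" using Suc.IH h by simp
  have xh: "x i tt e h \<in> borel_measurable (Fm ?n)" by (rule Fm_mono[OF _ xh0]) simp
  have xi: "\<xi> i tt e h \<in> measurable (Fm ?n) (D i)" by (rule xi_Fm[OF j e h]) simp
  have z': "z i tt e \<in> borel_measurable (Fm ?n)" by (rule Fm_mono[OF _ zz]) (simp add: Tm_ge0')
  have y': "y j tt \<in> borel_measurable (Fm ?n)" by (rule Fm_mono[OF _ yy]) (simp add: Tm_ge0)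
  show ?case unfolding eq Tm_Suc_h
    by (rule borel_measurable_diff[OF xh borel_measurable_scaleR[OF borel_measurable_const
         borel_measurable_add[OF borel_measurable_add[OF G_comp_meas[OF j xh xi] z'] y']]])
qed

lemma xg_z_meas:
  assumes xb: "xbar tt \<in> borel_measurable (Fm (Tm tt 0 0))"
    and yy: "\<And>j. j < N \<Longrightarrow> y j tt \<in> borel_measurable (Fm (Tm tt 0 0 + 1))"
  shows "e \<le> E \<Longrightarrow> (\<forall>j<N. xg j tt e \<in> borel_measurable (Fm (Tm tt e 0))) \<and>
     (\<forall>j<N. \<forall>i\<in>C j. z i tt e \<in> borel_measurable (Fm (Tm tt e 0 + 1)))"
proof (induction e)
  case 0
  have A: "\<forall>j<N. xg j tt 0 \<in> borel_measurable (Fm (Tm tt 0 0))"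
  proof safe
    fix j assume j: "j < N"
    have "xg j tt 0 = xbar tt" by (rule ext) (rule xg_0[OF j])
    then show "xg j tt 0 \<in> borel_measurable (Fm (Tm tt 0 0))" using xb by simp
  qed
  have B: "\<forall>j<N. \<forall>i\<in>C j. z i tt 0 \<in> borel_measurable (Fm (Tm tt 0 0 + 1))"
  proof safe
    fix j i assume j: "j < N" and i: "i \<in> C j"
    have eq: "z i tt 0 = (\<lambda>\<omega>. - G i (xbar tt \<omega>) (\<xi> i tt 0 0 \<omega>)
        + (1 / real (card (C j))) *\<^sub>R (\<Sum>i'\<in>C j. G i' (xbar tt \<omega>) (\<xi> i' tt 0 0 \<omega>)))"
      by (rule ext) (rule z_0[OF j i])
    have xb': "xbar tt \<in> borel_measurable (Fm (Tm tt 0 0 + 1))" using xb by (rule Fm_mono[rotated]) simp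
    have xi: "\<And>i'. i' \<in> C j \<Longrightarrow> \<xi> i' tt 0 0 \<in> measurable (Fm (Tm tt 0 0 + 1)) (D i')"
      using j E_pos H_pos by (intro xi_Fm[of j]) (auto simp: Tm_def)
    have Gm: "\<And>i'. i' \<in> C j \<Longrightarrow> (\<lambda>\<omega>. G i' (xbar tt \<omega>) (\<xi> i' tt 0 0 \<omega>)) \<in> borel_measurable (Fm (Tm tt 0 0 + 1))"
      by (rule G_comp_meas[OF j(1) _ xb' xi])
    show "z i tt 0 \<in> borel_measurable (Fm (Tm tt 0 0 + 1))" unfolding eq
      by (rule borel_measurable_add[OF borel_measurable_uminus[OF Gm[OF i]]
          borel_measurable_scaleR[OF borel_measurable_const borel_measurable_sum[OF Gm]]])
  qed
  show ?case using A B by simp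
next
  case (Suc e)
  have e: "e < E" using Suc.prems by simp
  have IH: "\<forall>j<N. xg j tt e \<in> borel_measurable (Fm (Tm tt e 0))"
      "\<forall>j<N. \<forall>i\<in>C j. z i tt e \<in> borel_measurable (Fm (Tm tt e 0 + 1))"
    using Suc.IH e by simp_all
  have xH: "\<And>j i. j < N \<Longrightarrow> i \<in> C j \<Longrightarrow> x i tt e H \<in> borel_measurable (Fm (Tm tt (Suc e) 0))"
  proof -
    fix j i assume j: "j < N" and i: "i \<in> C j"
    have "x i tt e H \<in> borel_measurable (Fm (Tm tt e H))"
    proof (rule x_meas[OF j(1) i e])
      show "xg j tt e \<in> borel_measurable (Fm (Tm tt e 0))" using IH(1) j by blast
      show "z i tt e \<in> borel_measurable (Fm (Tm tt e 0 + 1))" using IH(2) j i by blast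
      show "y j tt \<in> borel_measurable (Fm (Tm tt 0 0 + 1))" by (rule yy[OF j])
    qed simp
    then show "x i tt e H \<in> borel_measurable (Fm (Tm tt (Suc e) 0))" by (rule Fm_mono[rotated]) (rule Tm_H)
  qed
  have A: "\<forall>j<N. xg j tt (Suc e) \<in> borel_measurable (Fm (Tm tt (Suc e) 0))"
  proof safe
    fix j assume j: "j < N"
    have eq: "xg j tt (Suc e) = (\<lambda>\<omega>. (1 / real (card (C j))) *\<^sub>R (\<Sum>i\<in>C j. x i tt e H \<omega>))"
      by (rule ext) (rule xg_step[OF j e])
    show "xg j tt (Suc e) \<in> borel_measurable (Fm (Tm tt (Suc e) 0))" unfolding eq
      by (rule borel_measurable_scaleR[OF borel_measurable_const borel_measurable_sum[OF xH[OF j]]])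
  qed
  have B: "\<forall>j<N. \<forall>i\<in>C j. z i tt (Suc e) \<in> borel_measurable (Fm (Tm tt (Suc e) 0 + 1))"
  proof safe
    fix j i assume j: "j < N" and i: "i \<in> C j"
    have eq: "z i tt (Suc e) = (\<lambda>\<omega>. z i tt e \<omega> + (1 / (real H * \<gamma>)) *\<^sub>R (x i tt e H \<omega> - xg j tt (Suc e) \<omega>))"
      by (rule ext) (rule z_step[OF j i e])
    have z': "z i tt e \<in> borel_measurable (Fm (Tm tt (Suc e) 0 + 1))"
    proof -
      have "z i tt e \<in> borel_measurable (Fm (Tm tt e 0 + 1))" using IH(2) j i by blast
      then show ?thesis by (rule Fm_mono[rotated]) (simp add: Tm_e_le)
    qed
    have x': "x i tt e H \<in> borel_measurable (Fm (Tm tt (Suc e) 0 + 1))"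
      using xH[OF j i] by (rule Fm_mono[rotated]) simp
    have g': "xg j tt (Suc e) \<in> borel_measurable (Fm (Tm tt (Suc e) 0 + 1))"
    proof -
      have "xg j tt (Suc e) \<in> borel_measurable (Fm (Tm tt (Suc e) 0))" using A j by blast
      then show ?thesis by (rule Fm_mono[rotated]) simp
    qed
    show "z i tt (Suc e) \<in> borel_measurable (Fm (Tm tt (Suc e) 0 + 1))" unfolding eq
      by (rule borel_measurable_add[OF z' borel_measurable_scaleR[OF borel_measurable_const
          borel_measurable_diff[OF x' g']]])
  qed
  show ?case using A B by simp
qed

lemma round_meas:
  "xbar tt \<in> borel_measurable (Fm (Tm tt 0 0)) \<and> (\<forall>j<N. y j tt \<in> borel_measurable (Fm (Tm tt 0 0 + 1)))"
proof (induction tt)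
  case 0
  have A: "xbar 0 \<in> borel_measurable (Fm (Tm 0 0 0))"
  proof -
    have "xbar 0 = (\<lambda>\<omega>. x0)" by (rule ext) (rule xbar_init)
    then show ?thesis by simp
  qed
  have B: "\<forall>j<N. y j 0 \<in> borel_measurable (Fm (Tm 0 0 0 + 1))"
  proof safe
    fix j assume j: "j < N"
    have eq: "y j 0 = (\<lambda>\<omega>. - ((1 / real (card (C j))) *\<^sub>R (\<Sum>i\<in>C j. G i x0 (\<xi> i 0 0 0 \<omega>)))
        + (1 / real N) *\<^sub>R (\<Sum>j'<N. (1 / real (card (C j'))) *\<^sub>R (\<Sum>i\<in>C j'. G i x0 (\<xi> i 0 0 0 \<omega>))))"
      by (rule ext) (rule y_init[OF j])
    have xi: "\<And>j' i. j' < N \<Longrightarrow> i \<in> C j' \<Longrightarrow> \<xi> i 0 0 0 \<in> measurable (Fm (Tm 0 0 0 + 1)) (D i)"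
    proof -
      fix j' i assume "j' < N" "i \<in> C j'"
      then show "\<xi> i 0 0 0 \<in> measurable (Fm (Tm 0 0 0 + 1)) (D i)"
        using E_pos H_pos by (intro xi_Fm[of j' i]) (auto simp: Tm_def)
    qed
    have Gm: "\<And>j' i. j' < N \<Longrightarrow> i \<in> C j' \<Longrightarrow> (\<lambda>\<omega>. G i x0 (\<xi> i 0 0 0 \<omega>)) \<in> borel_measurable (Fm (Tm 0 0 0 + 1))"
    proof -
      fix j' i assume a: "j' < N" "i \<in> C j'"
      show "(\<lambda>\<omega>. G i x0 (\<xi> i 0 0 0 \<omega>)) \<in> borel_measurable (Fm (Tm 0 0 0 + 1))"
        by (rule G_comp_meas[OF a borel_measurable_const xi[OF a]])
    qed
    have inner: "\<And>j'. j' \<in> {..<N} \<Longrightarrow> (\<lambda>\<omega>. (1 / real (card (C j'))) *\<^sub>R (\<Sum>i\<in>C j'. G i x0 (\<xi> i 0 0 0 \<omega>)))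
       \<in> borel_measurable (Fm (Tm 0 0 0 + 1))"
    proof -
      fix j' assume "j' \<in> {..<N}"
      then have jj: "j' < N" by simp
      show "(\<lambda>\<omega>. (1 / real (card (C j'))) *\<^sub>R (\<Sum>i\<in>C j'. G i x0 (\<xi> i 0 0 0 \<omega>)))
       \<in> borel_measurable (Fm (Tm 0 0 0 + 1))"
        by (rule borel_measurable_scaleR[OF borel_measurable_const borel_measurable_sum[OF Gm[OF jj]]])
    qed
    show "y j 0 \<in> borel_measurable (Fm (Tm 0 0 0 + 1))" unfolding eq
      by (rule borel_measurable_add[OF borel_measurable_uminus[OF borel_measurable_scaleR[OF
          borel_measurable_const borel_measurable_sum[OF Gm[OF j]]]]
          borel_measurable_scaleR[OF borel_measurable_const borel_measurable_sum[OF inner]]])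
  qed
  show ?case using A B by simp
next
  case (Suc tt)
  then have xb: "xbar tt \<in> borel_measurable (Fm (Tm tt 0 0))"
    and yy: "\<And>j. j < N \<Longrightarrow> y j tt \<in> borel_measurable (Fm (Tm tt 0 0 + 1))" by auto
  have xgE: "\<And>j. j < N \<Longrightarrow> xg j tt E \<in> borel_measurable (Fm (Tm (Suc tt) 0 0))"
    using xg_z_meas[OF xb yy, of E] by (simp add: Tm_E)
  have eqx: "xbar (Suc tt) = (\<lambda>\<omega>. (1 / real N) *\<^sub>R (\<Sum>j<N. xg j tt E \<omega>))"
    by (rule ext) (rule xbar_step)
  have A: "xbar (Suc tt) \<in> borel_measurable (Fm (Tm (Suc tt) 0 0))"
  proof -
    have xgE': "\<And>j. j \<in> {..<N} \<Longrightarrow> xg j tt E \<in> borel_measurable (Fm (Tm (Suc tt) 0 0))"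
      using xgE by simp
    show ?thesis unfolding eqx
      by (rule borel_measurable_scaleR[OF borel_measurable_const borel_measurable_sum[OF xgE']])
  qed
  have B: "\<forall>j<N. y j (Suc tt) \<in> borel_measurable (Fm (Tm (Suc tt) 0 0 + 1))"
  proof safe
    fix j assume j: "j < N"
    have eq: "y j (Suc tt) = (\<lambda>\<omega>. y j tt \<omega> + (1 / (real H * real E * \<gamma>)) *\<^sub>R (xg j tt E \<omega> - xbar (Suc tt) \<omega>))"
      by (rule ext) (rule y_step[OF j])
    have y': "y j tt \<in> borel_measurable (Fm (Tm (Suc tt) 0 0 + 1))"
      using yy[OF j] by (rule Fm_mono[rotated]) (simp add: Tm_tt)
    have g': "xg j tt E \<in> borel_measurable (Fm (Tm (Suc tt) 0 0 + 1))"
      using xgE[OF j] by (rule Fm_mono[rotated]) simp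
    have x': "xbar (Suc tt) \<in> borel_measurable (Fm (Tm (Suc tt) 0 0 + 1))"
      using A by (rule Fm_mono[rotated]) simp
    show "y j (Suc tt) \<in> borel_measurable (Fm (Tm (Suc tt) 0 0 + 1))" unfolding eq
      by (rule borel_measurable_add[OF y' borel_measurable_scaleR[OF borel_measurable_const
          borel_measurable_diff[OF g' x']]])
  qed
  show ?case using A B by simp
qed

lemma xbar_F: "xbar tt \<in> borel_measurable (Fm (Tm tt 0 0))" using round_meas by blast
lemma y_F: "j < N \<Longrightarrow> y j tt \<in> borel_measurable (Fm (Tm tt 0 0 + 1))" using round_meas by blast
lemma xg_F: "j < N \<Longrightarrow> e \<le> E \<Longrightarrow> xg j tt e \<in> borel_measurable (Fm (Tm tt e 0))"
  using xg_z_meas[OF xbar_F y_F] by blast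
lemma z_F: "j < N \<Longrightarrow> i \<in> C j \<Longrightarrow> e \<le> E \<Longrightarrow> z i tt e \<in> borel_measurable (Fm (Tm tt e 0 + 1))"
  using xg_z_meas[OF xbar_F y_F] by blast
lemma x_F:
  assumes a: "j < N" "i \<in> C j" "e < E" "h \<le> H"
  shows "x i tt e h \<in> borel_measurable (Fm (Tm tt e h))"
proof (rule x_meas[OF a(1,2,3) _ _ _ a(4)])
  show "xg j tt e \<in> borel_measurable (Fm (Tm tt e 0))" using xg_F a by simp
  show "z i tt e \<in> borel_measurable (Fm (Tm tt e 0 + 1))" using z_F a by simp
  show "y j tt \<in> borel_measurable (Fm (Tm tt 0 0 + 1))" using y_F a by simp
qed

lemma x_formula:
  assumes j: "j < N" "i \<in> C j" and e: "e < E"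
  shows "h \<le> H \<Longrightarrow> x i tt e h \<omega> = xg j tt e \<omega> - \<gamma> *\<^sub>R (\<Sum>h'<h. G i (x i tt e h' \<omega>) (\<xi> i tt e h' \<omega>) + z i tt e \<omega> + y j tt \<omega>)"
proof (induction h)
  case 0
  then show ?case using x_0[OF j e] by simp
next
  case (Suc h)
  then have h: "h < H" by simp
  have "x i tt e (Suc h) \<omega> = x i tt e h \<omega> - \<gamma> *\<^sub>R (G i (x i tt e h \<omega>) (\<xi> i tt e h \<omega>) + z i tt e \<omega> + y j tt \<omega>)"
    by (rule x_step[OF j e h])
  moreover have I: "x i tt e h \<omega> = xg j tt e \<omega> - \<gamma> *\<^sub>R (\<Sum>h'<h. G i (x i tt e h' \<omega>) (\<xi> i tt e h' \<omega>) + z i tt e \<omega> + y j tt \<omega>)"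
    using Suc.IH h by simp
  ultimately have "x i tt e (Suc h) \<omega> = (xg j tt e \<omega> - \<gamma> *\<^sub>R (\<Sum>h'<h. G i (x i tt e h' \<omega>) (\<xi> i tt e h' \<omega>) + z i tt e \<omega> + y j tt \<omega>))
     - \<gamma> *\<^sub>R (G i (x i tt e h \<omega>) (\<xi> i tt e h \<omega>) + z i tt e \<omega> + y j tt \<omega>)"
    by simp
  then show ?case by (simp only: sum.lessThan_Suc scaleR_right_distrib diff_diff_eq)
qed

lemma xH_form:
  assumes j: "j < N" "i \<in> C j" and e: "e < E"
  shows "x i tt e H \<omega> = xg j tt e \<omega> - \<gamma> *\<^sub>R ((\<Sum>h<H. G i (x i tt e h \<omega>) (\<xi> i tt e h \<omega>))
      + real H *\<^sub>R z i tt e \<omega> + real H *\<^sub>R y j tt \<omega>)"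
  using x_formula[OF j e order.refl] by (simp add: sum.distrib sum_constant_scaleR)

lemma card_pos: "j < N \<Longrightarrow> real (card (C j)) > 0"
  using C_fin C_ne by (simp add: card_gt_0_iff)

lemma zsum: "j < N \<Longrightarrow> e \<le> E \<Longrightarrow> (\<Sum>i\<in>C j. z i tt e \<omega>) = 0"
proof (induction e)
  case 0
  then have j: "j < N" by simp
  have c: "real (card (C j)) > 0" by (rule card_pos[OF j])
  have "(\<Sum>i\<in>C j. z i tt 0 \<omega>) = (\<Sum>i\<in>C j. - G i (xbar tt \<omega>) (\<xi> i tt 0 0 \<omega>)
        + (1 / real (card (C j))) *\<^sub>R (\<Sum>i'\<in>C j. G i' (xbar tt \<omega>) (\<xi> i' tt 0 0 \<omega>)))"
    using z_0[OF j] by simp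
  also have "\<dots> = 0" using c by (simp add: sum.distrib sum_negf sum_subtractf sum_constant_scaleR)
  finally show ?case .
next
  case (Suc e)
  then have j: "j < N" and e: "e < E" by auto
  have c: "real (card (C j)) > 0" by (rule card_pos[OF j])
  have IH: "(\<Sum>i\<in>C j. z i tt e \<omega>) = 0" using Suc e by simp
  have cx: "real (card (C j)) *\<^sub>R xg j tt (Suc e) \<omega> = (\<Sum>i\<in>C j. x i tt e H \<omega>)"
    using xg_step[OF j e, of tt \<omega>] c by simp
  have "(\<Sum>i\<in>C j. z i tt (Suc e) \<omega>) = (\<Sum>i\<in>C j. z i tt e \<omega> + (1 / (real H * \<gamma>)) *\<^sub>R (x i tt e H \<omega> - xg j tt (Suc e) \<omega>))"
    using z_step[OF j _ e] by simp
  also have "\<dots> = (\<Sum>i\<in>C j. z i tt e \<omega>) + (1 / (real H * \<gamma>)) *\<^sub>R ((\<Sum>i\<in>C j. x i tt e H \<omega>) - real (card (C j)) *\<^sub>R xg j tt (Suc e) \<omega>)"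
    by (simp add: sum.distrib sum_subtractf sum_constant_scaleR flip: scaleR_sum_right)
  also have "\<dots> = 0" using IH cx by simp
  finally show ?case .
qed

lemma z_Suc:
  assumes j: "j < N" "i \<in> C j" and e: "e < E"
  shows "z i tt (Suc e) \<omega> = - ((1 / real H) *\<^sub>R ((\<Sum>h<H. G i (x i tt e h \<omega>) (\<xi> i tt e h \<omega>))
     - (1 / real (card (C j))) *\<^sub>R (\<Sum>i'\<in>C j. \<Sum>h<H. G i' (x i' tt e h \<omega>) (\<xi> i' tt e h \<omega>))))"
proof -
  have "z i tt (Suc e) \<omega> = z i tt e \<omega> + (1 / (real H * \<gamma>)) *\<^sub>R (x i tt e H \<omega>
      - (1 / real (card (C j))) *\<^sub>R (\<Sum>i\<in>C j. x i tt e H \<omega>))"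
    using z_step[OF j e] xg_step[OF j(1) e] by simp
  also have "\<dots> = - ((1 / real H) *\<^sub>R ((\<Sum>h<H. G i (x i tt e h \<omega>) (\<xi> i tt e h \<omega>))
     - (1 / real (card (C j))) *\<^sub>R (\<Sum>i'\<in>C j. \<Sum>h<H. G i' (x i' tt e h \<omega>) (\<xi> i' tt e h \<omega>))))"
  proof (rule z_alg[where xg = "xg j tt e \<omega>" and yv = "y j tt \<omega>"])
    show "finite (C j)" "C j \<noteq> {}" using C_fin C_ne j by auto
    show "i \<in> C j" by fact
    show "H > 0" using H_pos by simp
    show "\<gamma> \<noteq> 0" using \<gamma>_pos by simp
    show "(\<Sum>i\<in>C j. z i tt e \<omega>) = 0" using zsum j e by simp
    fix i' assume "i' \<in> C j"
    then show "x i' tt e H \<omega> = xg j tt e \<omega> - \<gamma> *\<^sub>R ((\<Sum>h<H. G i' (x i' tt e h \<omega>) (\<xi> i' tt e h \<omega>))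
      + real H *\<^sub>R z i' tt e \<omega> + real H *\<^sub>R y j tt \<omega>)"
      by (rule xH_form[OF j(1) _ e])
  qed
  finally show ?thesis .
qed

definition "dd i tt e h \<omega> = G i (x i tt e h \<omega>) (\<xi> i tt e h \<omega>) - gF i (x i tt e h \<omega>)"

lemma noise_sum:
  assumes j: "j < N" "i \<in> C j" and e: "e < E"
  shows "m \<le> H \<Longrightarrow> (\<lambda>\<omega>. \<Sum>h<m. dd i tt e h \<omega>) \<in> borel_measurable (Fm (Tm tt e m)) \<and>
     (\<integral>\<^sup>+\<omega>. ennreal ((norm (\<Sum>h<m. dd i tt e h \<omega>))\<^sup>2) \<partial>M) \<le> ennreal (real m * \<sigma>\<^sup>2)"
proof (induction m)
  case 0
  then show ?case by simp
next
  case (Suc m)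
  then have m: "m < H" by simp
  have IH: "(\<lambda>\<omega>. \<Sum>h<m. dd i tt e h \<omega>) \<in> borel_measurable (Fm (Tm tt e m))"
    "(\<integral>\<^sup>+\<omega>. ennreal ((norm (\<Sum>h<m. dd i tt e h \<omega>))\<^sup>2) \<partial>M) \<le> ennreal (real m * \<sigma>\<^sup>2)"
    using Suc.IH m by simp_all
  have xm: "x i tt e m \<in> borel_measurable (Fm (Tm tt e m))" using x_F[OF j e] m by simp
  have "(\<integral>\<^sup>+\<omega>. ennreal ((norm (\<Sum>h<Suc m. dd i tt e h \<omega>))\<^sup>2) \<partial>M)
     = (\<integral>\<^sup>+\<omega>. ennreal ((norm ((\<Sum>h<m. dd i tt e h \<omega>) + (G i (x i tt e m \<omega>) (\<xi> i tt e m \<omega>) - gF i (x i tt e m \<omega>))))\<^sup>2) \<partial>M)"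
    by (simp add: dd_def)
  also have "\<dots> \<le> (\<integral>\<^sup>+\<omega>. ennreal ((norm (\<Sum>h<m. dd i tt e h \<omega>))\<^sup>2) \<partial>M) + ennreal (\<sigma>\<^sup>2)"
    by (rule noise_step[OF j e m IH(1) xm])
  also have "\<dots> \<le> ennreal (real m * \<sigma>\<^sup>2) + ennreal (\<sigma>\<^sup>2)"
    using IH(2) by (rule add_right_mono)
  also have "\<dots> = ennreal (real (Suc m) * \<sigma>\<^sup>2)"
    by (simp add: ennreal_plus[symmetric] algebra_simps del: ennreal_plus)
  finally have I: "(\<integral>\<^sup>+\<omega>. ennreal ((norm (\<Sum>h<Suc m. dd i tt e h \<omega>))\<^sup>2) \<partial>M) \<le> ennreal (real (Suc m) * \<sigma>\<^sup>2)" .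
  have xm': "x i tt e m \<in> borel_measurable (Fm (Tm tt e (Suc m)))"
    using xm by (rule Fm_mono[rotated]) (simp add: Tm_Suc_h)
  have xi': "\<xi> i tt e m \<in> measurable (Fm (Tm tt e (Suc m))) (D i)"
    by (rule xi_Fm[OF j e m]) (simp add: Tm_Suc_h)
  have S': "(\<lambda>\<omega>. \<Sum>h<m. dd i tt e h \<omega>) \<in> borel_measurable (Fm (Tm tt e (Suc m)))"
    using IH(1) by (rule Fm_mono[rotated]) (simp add: Tm_Suc_h)
  have dm: "dd i tt e m \<in> borel_measurable (Fm (Tm tt e (Suc m)))"
  proof -
    have "dd i tt e m = (\<lambda>\<omega>. G i (x i tt e m \<omega>) (\<xi> i tt e m \<omega>) - gF i (x i tt e m \<omega>))"
      by (simp add: dd_def fun_eq_iff)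
    also have "\<dots> \<in> borel_measurable (Fm (Tm tt e (Suc m)))"
      by (rule borel_measurable_diff[OF G_comp_meas[OF j xm' xi'] measurable_compose[OF xm' gF_meas[OF j]]])
    finally show ?thesis .
  qed
  have "(\<lambda>\<omega>. \<Sum>h<Suc m. dd i tt e h \<omega>) = (\<lambda>\<omega>. (\<Sum>h<m. dd i tt e h \<omega>) + dd i tt e m \<omega>)" by simp
  also have "\<dots> \<in> borel_measurable (Fm (Tm tt e (Suc m)))"
    by (rule borel_measurable_add[OF S' dm])
  finally show ?case using I by simp
qed

lemma lip_sq: "j < N \<Longrightarrow> i \<in> C j \<Longrightarrow> (norm (gF i u - gF i v))\<^sup>2 \<le> L\<^sup>2 * (norm (u - v))\<^sup>2"
proof -
  assume j: "j < N" "i \<in> C j"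
  have "(norm (gF i u - gF i v))\<^sup>2 \<le> (L * norm (u - v))\<^sup>2"
    by (intro power_mono A1[OF j]) simp
  then show ?thesis by (simp add: power_mult_distrib)
qed

lemma sq_meas: "f \<in> borel_measurable M \<Longrightarrow> (\<lambda>\<omega>. ennreal ((norm (f \<omega>))\<^sup>2)) \<in> borel_measurable M"
  by measurable

lemma A_meas:
  assumes j: "j < N" "i \<in> C j" and e: "e \<le> E"
  shows "(\<lambda>\<omega>. z i t e \<omega> + gF i (xg j t e \<omega>) - (1 / real (card (C j))) *\<^sub>R (\<Sum>i'\<in>C j. gF i' (xg j t e \<omega>)))
     \<in> borel_measurable M"
proof -
  have xgM: "xg j t e \<in> borel_measurable M" using xg_F[OF j(1) e] by (rule Fm_M)
  have zM: "z i t e \<in> borel_measurable M" using z_F[OF j e] by (rule Fm_M)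
  have gFx: "\<And>i'. i' \<in> C j \<Longrightarrow> (\<lambda>\<omega>. gF i' (xg j t e \<omega>)) \<in> borel_measurable M"
    using measurable_compose[OF xgM gF_meas[OF j(1)]] by simp
  show ?thesis
    by (rule borel_measurable_diff[OF borel_measurable_add[OF zM gFx[OF j(2)]]
        borel_measurable_scaleR[OF borel_measurable_const borel_measurable_sum[OF gFx]]])
qed

lemma step0:
  assumes j: "j < N"
  shows "(\<Sum>i\<in>C j. sqE M (\<lambda>\<omega>. z i t 0 \<omega> + gF i (xg j t 0 \<omega>)
       - (1 / real (card (C j))) *\<^sub>R (\<Sum>i'\<in>C j. gF i' (xg j t 0 \<omega>))))
     \<le> ennreal (real (card (C j)) * \<sigma>\<^sup>2)"
proof -
  define c where "c = real (card (C j))"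
  define dX where "dX i \<omega> = G i (xbar t \<omega>) (\<xi> i t 0 0 \<omega>) - gF i (xbar t \<omega>)" for i \<omega>
  define Ax where "Ax i \<omega> = z i t 0 \<omega> + gF i (xg j t 0 \<omega>) - (1 / c) *\<^sub>R (\<Sum>i'\<in>C j. gF i' (xg j t 0 \<omega>))" for i \<omega>
  have fin: "finite (C j)" "C j \<noteq> {}" using C_fin C_ne j by auto
  have E0: "0 < E" and H0: "0 < H" using E_pos H_pos by auto
  have xbM: "xbar t \<in> borel_measurable M" using xbar_F by (rule Fm_M)
  have measA: "\<And>i. i \<in> C j \<Longrightarrow> (\<lambda>\<omega>. ennreal ((norm (Ax i \<omega>))\<^sup>2)) \<in> borel_measurable M"
    unfolding Ax_def c_def by (intro sq_meas A_meas[OF j]) auto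
  have measD: "\<And>i. i \<in> C j \<Longrightarrow> (\<lambda>\<omega>. ennreal ((norm (dX i \<omega>))\<^sup>2)) \<in> borel_measurable M"
  proof -
    fix i assume i: "i \<in> C j"
    have "\<xi> i t 0 0 \<in> measurable M (D i)" using XI_meas[of "(i, t, 0, 0)"] i j E0 H0 by (auto simp: II_def)
    then have "(\<lambda>\<omega>. dX i \<omega>) \<in> borel_measurable M"
      unfolding dX_def using G_comp_meas[OF j i xbM] measurable_compose[OF xbM gF_meas[OF j i]]
      by (intro borel_measurable_diff) auto
    then show "(\<lambda>\<omega>. ennreal ((norm (dX i \<omega>))\<^sup>2)) \<in> borel_measurable M" by (rule sq_meas)
  qed
  have pw: "(\<Sum>i\<in>C j. ennreal ((norm (Ax i \<omega>))\<^sup>2)) \<le> (\<Sum>i\<in>C j. ennreal ((norm (dX i \<omega>))\<^sup>2))" for \<omega>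
  proof -
    have "Ax i \<omega> = - (dX i \<omega> - (1 / c) *\<^sub>R (\<Sum>i'\<in>C j. dX i' \<omega>))" if i: "i \<in> C j" for i
      unfolding Ax_def dX_def z_0[OF j i] xg_0[OF j]
      using avg_identity0[where Gv="\<lambda>i. G i (xbar t \<omega>) (\<xi> i t 0 0 \<omega>)" and g="\<lambda>i. gF i (xbar t \<omega>)"
         and c=c and A="C j" and i=i] unfolding c_def by simp
    then have "(\<Sum>i\<in>C j. (norm (Ax i \<omega>))\<^sup>2) = (\<Sum>i\<in>C j. (norm (dX i \<omega> - (1 / c) *\<^sub>R (\<Sum>i'\<in>C j. dX i' \<omega>)))\<^sup>2)"
      by (intro sum.cong) (auto simp: norm_minus_commute)
    also have "\<dots> \<le> (\<Sum>i\<in>C j. (norm (dX i \<omega>))\<^sup>2)" unfolding c_def by (rule dev_sum_le[OF fin])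
    finally show ?thesis by (simp add: ennreal_leI)
  qed
  have "(\<Sum>i\<in>C j. sqE M (Ax i)) = (\<integral>\<^sup>+\<omega>. (\<Sum>i\<in>C j. ennreal ((norm (Ax i \<omega>))\<^sup>2)) \<partial>M)"
    unfolding sqE_def by (rule nn_integral_sum[symmetric]) (rule measA)
  also have "\<dots> \<le> (\<integral>\<^sup>+\<omega>. (\<Sum>i\<in>C j. ennreal ((norm (dX i \<omega>))\<^sup>2)) \<partial>M)"
    by (intro nn_integral_mono pw)
  also have "\<dots> = (\<Sum>i\<in>C j. (\<integral>\<^sup>+\<omega>. ennreal ((norm (dX i \<omega>))\<^sup>2) \<partial>M))"
    by (rule nn_integral_sum) (rule measD)
  also have "\<dots> \<le> (\<Sum>i\<in>C j. ennreal (\<sigma>\<^sup>2))"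
  proof (rule sum_mono)
    fix i assume i: "i \<in> C j"
    have "(\<integral>\<^sup>+\<omega>. ennreal ((norm ((\<lambda>\<omega>. 0::'a) \<omega> + (G i (xbar t \<omega>) (\<xi> i t 0 0 \<omega>) - gF i (xbar t \<omega>))))\<^sup>2) \<partial>M)
        \<le> (\<integral>\<^sup>+\<omega>. ennreal ((norm ((\<lambda>\<omega>. 0::'a) \<omega>))\<^sup>2) \<partial>M) + ennreal (\<sigma>\<^sup>2)"
      by (rule noise_step[OF j i E0 H0]) (auto intro: xbar_F)
    then show "(\<integral>\<^sup>+\<omega>. ennreal ((norm (dX i \<omega>))\<^sup>2) \<partial>M) \<le> ennreal (\<sigma>\<^sup>2)"
      by (simp add: dX_def)
  qed
  also have "\<dots> = ennreal (real (card (C j)) * \<sigma>\<^sup>2)"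
    by (simp add: ennreal_mult ennreal_of_nat_eq_real_of_nat)
  finally show ?thesis unfolding Ax_def c_def .
qed

lemma nn_int_split:
  fixes f r :: "'w \<Rightarrow> ennreal" and g :: "nat \<Rightarrow> 'w \<Rightarrow> ennreal"
  assumes f: "f \<in> borel_measurable M" and g: "\<And>h. h \<in> HH \<Longrightarrow> g h \<in> borel_measurable M"
    and r: "r \<in> borel_measurable M"
  shows "(\<integral>\<^sup>+\<omega>. a * f \<omega> + b * (\<Sum>h\<in>HH. g h \<omega>) + c * r \<omega> \<partial>M)
     = a * (\<integral>\<^sup>+\<omega>. f \<omega> \<partial>M) + b * (\<Sum>h\<in>HH. \<integral>\<^sup>+\<omega>. g h \<omega> \<partial>M) + c * (\<integral>\<^sup>+\<omega>. r \<omega> \<partial>M)"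
proof -
  have gs: "(\<lambda>\<omega>. \<Sum>h\<in>HH. g h \<omega>) \<in> borel_measurable M" using g by (rule borel_measurable_sum)
  have "(\<integral>\<^sup>+\<omega>. a * f \<omega> + b * (\<Sum>h\<in>HH. g h \<omega>) + c * r \<omega> \<partial>M)
      = (\<integral>\<^sup>+\<omega>. a * f \<omega> + b * (\<Sum>h\<in>HH. g h \<omega>) \<partial>M) + (\<integral>\<^sup>+\<omega>. c * r \<omega> \<partial>M)"
    using f gs r by (intro nn_integral_add) auto
  also have "(\<integral>\<^sup>+\<omega>. a * f \<omega> + b * (\<Sum>h\<in>HH. g h \<omega>) \<partial>M)
      = (\<integral>\<^sup>+\<omega>. a * f \<omega> \<partial>M) + (\<integral>\<^sup>+\<omega>. b * (\<Sum>h\<in>HH. g h \<omega>) \<partial>M)"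
    using f gs by (intro nn_integral_add) auto
  also have "(\<integral>\<^sup>+\<omega>. a * f \<omega> \<partial>M) = a * (\<integral>\<^sup>+\<omega>. f \<omega> \<partial>M)" using f by (rule nn_integral_cmult)
  also have "(\<integral>\<^sup>+\<omega>. b * (\<Sum>h\<in>HH. g h \<omega>) \<partial>M) = b * (\<integral>\<^sup>+\<omega>. (\<Sum>h\<in>HH. g h \<omega>) \<partial>M)" using gs by (rule nn_integral_cmult)
  also have "(\<integral>\<^sup>+\<omega>. (\<Sum>h\<in>HH. g h \<omega>) \<partial>M) = (\<Sum>h\<in>HH. \<integral>\<^sup>+\<omega>. g h \<omega> \<partial>M)" using g by (rule nn_integral_sum)
  also have "(\<integral>\<^sup>+\<omega>. c * r \<omega> \<partial>M) = c * (\<integral>\<^sup>+\<omega>. r \<omega> \<partial>M)" using r by (rule nn_integral_cmult)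
  finally show ?thesis .
qed

lemma stepS:
  assumes j: "j < N" and eS: "Suc e < E"
  shows "(\<Sum>i\<in>C j. sqE M (\<lambda>\<omega>. z i t (Suc e) \<omega> + gF i (xg j t (Suc e) \<omega>)
       - (1 / real (card (C j))) *\<^sub>R (\<Sum>i'\<in>C j. gF i' (xg j t (Suc e) \<omega>))))
     \<le> ennreal (2 * real (card (C j)) / real H * \<sigma>\<^sup>2)
       + ennreal (4 * L\<^sup>2 / real H) * (\<Sum>i\<in>C j. \<Sum>h<H. sqE M (\<lambda>\<omega>. xg j t e \<omega> - x i t e h \<omega>))
       + ennreal (4 * L\<^sup>2 * real (card (C j))) * sqE M (\<lambda>\<omega>. xg j t (Suc e) \<omega> - xg j t e \<omega>)"
proof -
  have e: "e < E" and eSle: "Suc e \<le> E" using eS by auto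
  define c where "c = real (card (C j))"
  have c: "c > 0" unfolding c_def by (rule card_pos[OF j])
  have fin: "finite (C j)" "C j \<noteq> {}" using C_fin C_ne j by auto
  have H0: "H > 0" using H_pos by simp
  define Ax where "Ax i \<omega> = z i t (Suc e) \<omega> + gF i (xg j t (Suc e) \<omega>) - (1 / c) *\<^sub>R (\<Sum>i'\<in>C j. gF i' (xg j t (Suc e) \<omega>))" for i \<omega>
  define nn where "nn i \<omega> = (1 / real H) *\<^sub>R (\<Sum>h<H. dd i t e h \<omega>)" for i \<omega>
  define b where "b i \<omega> = (1 / real H) *\<^sub>R (\<Sum>h<H. G i (x i t e h \<omega>) (\<xi> i t e h \<omega>)) - gF i (xg j t (Suc e) \<omega>)" for i \<omega>
  define Y where "Y i h \<omega> = (norm (xg j t e \<omega> - x i t e h \<omega>))\<^sup>2" for i h \<omega>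
  define R where "R \<omega> = (norm (xg j t (Suc e) \<omega> - xg j t e \<omega>))\<^sup>2" for \<omega>
  define K where "K = 4 * L\<^sup>2 / real H"
  have K0: "K \<ge> 0" unfolding K_def by simp
  have Axb: "Ax i \<omega> = - (b i \<omega> - (1 / c) *\<^sub>R (\<Sum>i'\<in>C j. b i' \<omega>))" if i: "i \<in> C j" for i \<omega>
    unfolding Ax_def b_def z_Suc[OF j i e]
    using avg_identity[where S="\<lambda>i. \<Sum>h<H. G i (x i t e h \<omega>) (\<xi> i t e h \<omega>)"
        and g="\<lambda>i. gF i (xg j t (Suc e) \<omega>)" and hh="real H" and c=c and A="C j" and i=i]
    unfolding c_def by simp
  have bb: "(norm (b i \<omega>))\<^sup>2 \<le> 2 * (norm (nn i \<omega>))\<^sup>2 + K * (\<Sum>h<H. Y i h \<omega>) + 4 * L\<^sup>2 * R \<omega>"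
    if i: "i \<in> C j" for i \<omega>
  proof -
    let ?u = "gF i (xg j t e \<omega>)" and ?v = "gF i (xg j t (Suc e) \<omega>)"
    let ?p = "(1 / real H) *\<^sub>R (\<Sum>h<H. gF i (x i t e h \<omega>) - ?u)"
    have bs: "b i \<omega> = nn i \<omega> + ?p + (?u - ?v)"
      unfolding b_def nn_def dd_def by (rule b_split[OF H0])
    have "(norm (b i \<omega>))\<^sup>2 \<le> 2 * (norm (nn i \<omega>))\<^sup>2 + 4 * (norm ?p)\<^sup>2 + 4 * (norm (?u - ?v))\<^sup>2"
      unfolding bs by (rule norm3_sq_le)
    also have "(norm ?p)\<^sup>2 \<le> (1 / real H) * (\<Sum>h<H. (norm (gF i (x i t e h \<omega>) - ?u))\<^sup>2)"
      by (rule avg_sq_le[OF H0])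
    also have "(\<Sum>h<H. (norm (gF i (x i t e h \<omega>) - ?u))\<^sup>2) \<le> (\<Sum>h<H. L\<^sup>2 * Y i h \<omega>)"
      unfolding Y_def by (intro sum_mono) (simp add: lip_sq[OF j i] norm_minus_commute)
    also have "(norm (?u - ?v))\<^sup>2 \<le> L\<^sup>2 * R \<omega>"
      unfolding R_def using lip_sq[OF j i] by (simp add: norm_minus_commute)
    finally show ?thesis
      by (simp add: K_def sum_distrib_left[symmetric] mult_left_mono divide_simps mult.assoc)
  qed
  have pw_real: "(\<Sum>i\<in>C j. (norm (Ax i \<omega>))\<^sup>2) \<le> (\<Sum>i\<in>C j. 2 * (norm (nn i \<omega>))\<^sup>2 + K * (\<Sum>h<H. Y i h \<omega>) + 4 * L\<^sup>2 * R \<omega>)" for \<omega>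
  proof -
    have "(\<Sum>i\<in>C j. (norm (Ax i \<omega>))\<^sup>2) = (\<Sum>i\<in>C j. (norm (b i \<omega> - (1 / c) *\<^sub>R (\<Sum>i'\<in>C j. b i' \<omega>)))\<^sup>2)"
      using Axb by (intro sum.cong) (auto simp: norm_minus_commute)
    also have "\<dots> \<le> (\<Sum>i\<in>C j. (norm (b i \<omega>))\<^sup>2)" unfolding c_def by (rule dev_sum_le[OF fin])
    also have "\<dots> \<le> (\<Sum>i\<in>C j. 2 * (norm (nn i \<omega>))\<^sup>2 + K * (\<Sum>h<H. Y i h \<omega>) + 4 * L\<^sup>2 * R \<omega>)"
      by (intro sum_mono bb)
    finally show ?thesis .
  qed
  have Y0: "Y i h \<omega> \<ge> 0" for i h \<omega> unfolding Y_def by simp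
  have R0: "R \<omega> \<ge> 0" for \<omega> unfolding R_def by simp
  have pw: "(\<Sum>i\<in>C j. ennreal ((norm (Ax i \<omega>))\<^sup>2)) \<le> (\<Sum>i\<in>C j. ennreal 2 * ennreal ((norm (nn i \<omega>))\<^sup>2)
      + ennreal K * (\<Sum>h<H. ennreal (Y i h \<omega>)) + ennreal (4 * L\<^sup>2) * ennreal (R \<omega>))" for \<omega>
  proof -
    have "(\<Sum>i\<in>C j. ennreal ((norm (Ax i \<omega>))\<^sup>2)) = ennreal (\<Sum>i\<in>C j. (norm (Ax i \<omega>))\<^sup>2)"
      by simp
    also have "\<dots> \<le> ennreal (\<Sum>i\<in>C j. 2 * (norm (nn i \<omega>))\<^sup>2 + K * (\<Sum>h<H. Y i h \<omega>) + 4 * L\<^sup>2 * R \<omega>)"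
      by (rule ennreal_leI[OF pw_real])
    also have "\<dots> = (\<Sum>i\<in>C j. ennreal (2 * (norm (nn i \<omega>))\<^sup>2 + K * (\<Sum>h<H. Y i h \<omega>) + 4 * L\<^sup>2 * R \<omega>))"
      using K0 Y0 R0 by (intro sum_ennreal[symmetric]) (auto intro!: add_nonneg_nonneg mult_nonneg_nonneg sum_nonneg)
    also have "\<dots> = (\<Sum>i\<in>C j. ennreal 2 * ennreal ((norm (nn i \<omega>))\<^sup>2)
      + ennreal K * (\<Sum>h<H. ennreal (Y i h \<omega>)) + ennreal (4 * L\<^sup>2) * ennreal (R \<omega>))"
    proof (rule sum.cong[OF refl])
      fix i assume "i \<in> C j"
      have s: "(\<Sum>h<H. ennreal (Y i h \<omega>)) = ennreal (\<Sum>h<H. Y i h \<omega>)" using Y0 by simp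
      show "ennreal (2 * (norm (nn i \<omega>))\<^sup>2 + K * (\<Sum>h<H. Y i h \<omega>) + 4 * L\<^sup>2 * R \<omega>)
        = ennreal 2 * ennreal ((norm (nn i \<omega>))\<^sup>2) + ennreal K * (\<Sum>h<H. ennreal (Y i h \<omega>)) + ennreal (4 * L\<^sup>2) * ennreal (R \<omega>)"
      proof -
        have S0: "0 \<le> (\<Sum>h<H. Y i h \<omega>)" using Y0 by (simp add: sum_nonneg)
        have A0: "0 \<le> 2 * (norm (nn i \<omega>))\<^sup>2" by simp
        have B0: "0 \<le> K * (\<Sum>h<H. Y i h \<omega>)" using K0 S0 by simp
        have C0: "0 \<le> 4 * L\<^sup>2 * R \<omega>" using R0 by simp
        have "ennreal (2 * (norm (nn i \<omega>))\<^sup>2 + K * (\<Sum>h<H. Y i h \<omega>) + 4 * L\<^sup>2 * R \<omega>)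
          = ennreal (2 * (norm (nn i \<omega>))\<^sup>2 + K * (\<Sum>h<H. Y i h \<omega>)) + ennreal (4 * L\<^sup>2 * R \<omega>)"
          using A0 B0 C0 by (intro ennreal_plus) auto
        also have "ennreal (2 * (norm (nn i \<omega>))\<^sup>2 + K * (\<Sum>h<H. Y i h \<omega>))
          = ennreal (2 * (norm (nn i \<omega>))\<^sup>2) + ennreal (K * (\<Sum>h<H. Y i h \<omega>))"
          using A0 B0 by (intro ennreal_plus) auto
        also have "ennreal (2 * (norm (nn i \<omega>))\<^sup>2) = ennreal 2 * ennreal ((norm (nn i \<omega>))\<^sup>2)"
          by (rule ennreal_mult) auto
        also have "ennreal (K * (\<Sum>h<H. Y i h \<omega>)) = ennreal K * ennreal (\<Sum>h<H. Y i h \<omega>)"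
          using K0 S0 by (rule ennreal_mult)
        also have "ennreal (4 * L\<^sup>2 * R \<omega>) = ennreal (4 * L\<^sup>2) * ennreal (R \<omega>)"
          using R0 by (intro ennreal_mult) auto
        finally show ?thesis unfolding s .
      qed
    qed
    finally show ?thesis .
  qed
  have measA: "\<And>i. i \<in> C j \<Longrightarrow> (\<lambda>\<omega>. ennreal ((norm (Ax i \<omega>))\<^sup>2)) \<in> borel_measurable M"
    unfolding Ax_def c_def by (intro sq_meas A_meas[OF j _ eSle])
  have xgeM: "xg j t e \<in> borel_measurable M" using xg_F[OF j, of e t] e by (intro Fm_M) simp
  have xgSM: "xg j t (Suc e) \<in> borel_measurable M" using xg_F[OF j eSle] by (rule Fm_M)
  have measY: "\<And>i h. i \<in> C j \<Longrightarrow> h < H \<Longrightarrow> (\<lambda>\<omega>. ennreal (Y i h \<omega>)) \<in> borel_measurable M"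
  proof -
    fix i h assume i: "i \<in> C j" and h: "h < H"
    have "x i t e h \<in> borel_measurable M" using x_F[OF j i e, of h t] h by (intro Fm_M) simp
    then show "(\<lambda>\<omega>. ennreal (Y i h \<omega>)) \<in> borel_measurable M"
      unfolding Y_def using xgeM by (intro sq_meas borel_measurable_diff)
  qed
  have measR: "(\<lambda>\<omega>. ennreal (R \<omega>)) \<in> borel_measurable M"
    unfolding R_def using xgeM xgSM by (intro sq_meas borel_measurable_diff)
  have SdM: "\<And>i. i \<in> C j \<Longrightarrow> (\<lambda>\<omega>. \<Sum>h<H. dd i t e h \<omega>) \<in> borel_measurable M"
  proof -
    fix i assume i: "i \<in> C j"
    show "(\<lambda>\<omega>. \<Sum>h<H. dd i t e h \<omega>) \<in> borel_measurable M"
      using noise_sum[OF j i e order.refl, of t] by (intro Fm_M[of _ "Tm t e H"]) simp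
  qed
  have measN: "\<And>i. i \<in> C j \<Longrightarrow> (\<lambda>\<omega>. ennreal ((norm (nn i \<omega>))\<^sup>2)) \<in> borel_measurable M"
    unfolding nn_def using SdM by (intro sq_meas borel_measurable_scaleR borel_measurable_const)
  have measRHS: "\<And>i. i \<in> C j \<Longrightarrow> (\<lambda>\<omega>. ennreal 2 * ennreal ((norm (nn i \<omega>))\<^sup>2)
      + ennreal K * (\<Sum>h<H. ennreal (Y i h \<omega>)) + ennreal (4 * L\<^sup>2) * ennreal (R \<omega>)) \<in> borel_measurable M"
    using measN measY measR by (intro borel_measurable_add borel_measurable_times borel_measurable_const borel_measurable_sum) auto
  have noise: "(\<integral>\<^sup>+\<omega>. ennreal ((norm (nn i \<omega>))\<^sup>2) \<partial>M) \<le> ennreal (\<sigma>\<^sup>2 / real H)" if i: "i \<in> C j" for i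
  proof -
    have "(\<integral>\<^sup>+\<omega>. ennreal ((norm (nn i \<omega>))\<^sup>2) \<partial>M)
        = (\<integral>\<^sup>+\<omega>. ennreal ((1 / real H)\<^sup>2) * ennreal ((norm (\<Sum>h<H. dd i t e h \<omega>))\<^sup>2) \<partial>M)"
      unfolding nn_def by (simp add: ennreal_mult[symmetric] power_divide)
    also have "\<dots> = ennreal ((1 / real H)\<^sup>2) * (\<integral>\<^sup>+\<omega>. ennreal ((norm (\<Sum>h<H. dd i t e h \<omega>))\<^sup>2) \<partial>M)"
      using SdM[OF i] by (intro nn_integral_cmult sq_meas)
    also have "\<dots> \<le> ennreal ((1 / real H)\<^sup>2) * ennreal (real H * \<sigma>\<^sup>2)"
      using noise_sum[OF j i e order.refl] by (intro mult_left_mono) auto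
    also have "\<dots> = ennreal (\<sigma>\<^sup>2 / real H)"
      using H0 by (simp add: ennreal_mult[symmetric] power2_eq_square)
    finally show ?thesis .
  qed
  have "(\<Sum>i\<in>C j. sqE M (Ax i)) = (\<integral>\<^sup>+\<omega>. (\<Sum>i\<in>C j. ennreal ((norm (Ax i \<omega>))\<^sup>2)) \<partial>M)"
    unfolding sqE_def by (rule nn_integral_sum[symmetric]) (rule measA)
  also have "\<dots> \<le> (\<integral>\<^sup>+\<omega>. (\<Sum>i\<in>C j. ennreal 2 * ennreal ((norm (nn i \<omega>))\<^sup>2)
      + ennreal K * (\<Sum>h<H. ennreal (Y i h \<omega>)) + ennreal (4 * L\<^sup>2) * ennreal (R \<omega>)) \<partial>M)"
    by (intro nn_integral_mono pw)
  also have "\<dots> = (\<Sum>i\<in>C j. \<integral>\<^sup>+\<omega>. ennreal 2 * ennreal ((norm (nn i \<omega>))\<^sup>2)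
      + ennreal K * (\<Sum>h<H. ennreal (Y i h \<omega>)) + ennreal (4 * L\<^sup>2) * ennreal (R \<omega>) \<partial>M)"
    by (rule nn_integral_sum) (rule measRHS)
  also have "\<dots> = (\<Sum>i\<in>C j. ennreal 2 * (\<integral>\<^sup>+\<omega>. ennreal ((norm (nn i \<omega>))\<^sup>2) \<partial>M)
      + ennreal K * (\<Sum>h<H. \<integral>\<^sup>+\<omega>. ennreal (Y i h \<omega>) \<partial>M) + ennreal (4 * L\<^sup>2) * (\<integral>\<^sup>+\<omega>. ennreal (R \<omega>) \<partial>M))"
    using measN measY measR by (intro sum.cong refl nn_int_split) auto
  also have "\<dots> \<le> (\<Sum>i\<in>C j. ennreal 2 * ennreal (\<sigma>\<^sup>2 / real H)
      + ennreal K * (\<Sum>h<H. \<integral>\<^sup>+\<omega>. ennreal (Y i h \<omega>) \<partial>M) + ennreal (4 * L\<^sup>2) * (\<integral>\<^sup>+\<omega>. ennreal (R \<omega>) \<partial>M))"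
    using noise by (intro sum_mono add_mono mult_left_mono order.refl) auto
  also have "\<dots> = of_nat (card (C j)) * (ennreal 2 * ennreal (\<sigma>\<^sup>2 / real H))
      + ennreal K * (\<Sum>i\<in>C j. \<Sum>h<H. \<integral>\<^sup>+\<omega>. ennreal (Y i h \<omega>) \<partial>M)
      + (of_nat (card (C j)) * ennreal (4 * L\<^sup>2)) * (\<integral>\<^sup>+\<omega>. ennreal (R \<omega>) \<partial>M)"
    by (simp add: sum.distrib sum_distrib_left mult.assoc)
  also have "of_nat (card (C j)) * (ennreal 2 * ennreal (\<sigma>\<^sup>2 / real H)) = ennreal (2 * real (card (C j)) / real H * \<sigma>\<^sup>2)"
  proof -
    have "of_nat (card (C j)) * (ennreal 2 * ennreal (\<sigma>\<^sup>2 / real H)) = ennreal (real (card (C j)) * (2 * (\<sigma>\<^sup>2 / real H)))"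
    proof -
      have 1: "ennreal 2 * ennreal (\<sigma>\<^sup>2 / real H) = ennreal (2 * (\<sigma>\<^sup>2 / real H))"
        by (rule ennreal_mult[symmetric]) auto
      have 2: "(of_nat (card (C j)) :: ennreal) = ennreal (real (card (C j)))"
        by (simp add: ennreal_of_nat_eq_real_of_nat)
      show ?thesis unfolding 1 2 by (rule ennreal_mult[symmetric]) auto
    qed
    also have "real (card (C j)) * (2 * (\<sigma>\<^sup>2 / real H)) = 2 * real (card (C j)) / real H * \<sigma>\<^sup>2" by simp
    finally show ?thesis .
  qed
  also have "of_nat (card (C j)) * ennreal (4 * L\<^sup>2) = ennreal (4 * L\<^sup>2 * real (card (C j)))"
    by (simp add: ennreal_mult[symmetric] ennreal_of_nat_eq_real_of_nat mult.commute)
  finally show ?thesis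
    unfolding Ax_def c_def K_def Y_def R_def sqE_def .
qed
end


theorem lemmaC2p4:
  fixes N :: nat and C :: "nat \<Rightarrow> nat set"
    and D :: "nat \<Rightarrow> 's measure"
    and Fs :: "nat \<Rightarrow> 'a::euclidean_space \<Rightarrow> 's \<Rightarrow> real"
    and F :: "nat \<Rightarrow> 'a \<Rightarrow> real"
    and G :: "nat \<Rightarrow> 'a \<Rightarrow> 's \<Rightarrow> 'a"
    and gF :: "nat \<Rightarrow> 'a \<Rightarrow> 'a"
    and L \<sigma> \<gamma> :: real and E H :: nat
    and M :: "'w measure"
    and \<xi> :: "nat \<Rightarrow> nat \<Rightarrow> nat \<Rightarrow> nat \<Rightarrow> 'w \<Rightarrow> 's"
    and x0 :: 'a
    and xbar :: "nat \<Rightarrow> 'w \<Rightarrow> 'a"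
    and y :: "nat \<Rightarrow> nat \<Rightarrow> 'w \<Rightarrow> 'a"
    and xg :: "nat \<Rightarrow> nat \<Rightarrow> nat \<Rightarrow> 'w \<Rightarrow> 'a"
    and z :: "nat \<Rightarrow> nat \<Rightarrow> nat \<Rightarrow> 'w \<Rightarrow> 'a"
    and x :: "nat \<Rightarrow> nat \<Rightarrow> nat \<Rightarrow> nat \<Rightarrow> 'w \<Rightarrow> 'a"
    and t :: nat
  assumes N_pos: "N \<ge> 1"
    and C_fin: "\<And>j. j < N \<Longrightarrow> finite (C j)"
    and C_ne: "\<And>j. j < N \<Longrightarrow> C j \<noteq> {}"
    and C_disj: "\<And>j j'. j < N \<Longrightarrow> j' < N \<Longrightarrow> j \<noteq> j' \<Longrightarrow> C j \<inter> C j' = {}"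
    \<comment> \<open>client distributions and stochastic losses / gradients\<close>
    and D_prob: "\<And>j i. j < N \<Longrightarrow> i \<in> C j \<Longrightarrow> prob_space (D i)"
    and G_meas: "\<And>j i. j < N \<Longrightarrow> i \<in> C j \<Longrightarrow>
        (\<lambda>(v, s). G i v s) \<in> borel_measurable (borel \<Otimes>\<^sub>M D i)"
    and Fs_grad: "\<And>j i v s. j < N \<Longrightarrow> i \<in> C j \<Longrightarrow>
        ((\<lambda>u. Fs i u s) has_derivative (\<lambda>h. G i v s \<bullet> h)) (at v)"
    and F_def: "\<And>j i v. j < N \<Longrightarrow> i \<in> C j \<Longrightarrow> F i v = (\<integral>s. Fs i v s \<partial>D i)"
    and F_grad: "\<And>j i v. j < N \<Longrightarrow> i \<in> C j \<Longrightarrow>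
        (F i has_derivative (\<lambda>h. gF i v \<bullet> h)) (at v)"
    \<comment> \<open>(A1)\<close>
    and A1: "\<And>j i u v. j < N \<Longrightarrow> i \<in> C j \<Longrightarrow> norm (gF i u - gF i v) \<le> L * norm (u - v)"
    \<comment> \<open>(A2)\<close>
    and A2_int: "\<And>j i v. j < N \<Longrightarrow> i \<in> C j \<Longrightarrow> integrable (D i) (G i v)"
    and A2_unb: "\<And>j i v. j < N \<Longrightarrow> i \<in> C j \<Longrightarrow> (\<integral>s. G i v s \<partial>D i) = gF i v"
    and A2_var: "\<And>j i v. j < N \<Longrightarrow> i \<in> C j \<Longrightarrow>
        (\<integral>\<^sup>+ s. ennreal ((norm (G i v s - gF i v))\<^sup>2) \<partial>D i) \<le> ennreal (\<sigma>\<^sup>2)"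
    \<comment> \<open>algorithm parameters\<close>
    and E_pos: "E \<ge> 1" and H_pos: "H \<ge> 1" and \<gamma>_pos: "\<gamma> > 0"
    \<comment> \<open>samples: independent, \<xi> i t e h distributed as D i\<close>
    and M_prob: "prob_space M"
    and \<xi>_indep: "prob_space.indep_vars M (\<lambda>(i, tt, e, h). D i) (\<lambda>(i, tt, e, h). \<xi> i tt e h)
        {(i, tt, e, h). i \<in> (\<Union>j<N. C j) \<and> e < E \<and> h < H}"
    and \<xi>_distr: "\<And>j i tt e h. j < N \<Longrightarrow> i \<in> C j \<Longrightarrow> e < E \<Longrightarrow> h < H \<Longrightarrow>
        distr M (D i) (\<xi> i tt e h) = D i"
    \<comment> \<open>MTGC iterates (pointwise in the outcome \<omega>)\<close>
    and y_init: "\<And>j \<omega>. j < N \<Longrightarrow> y j 0 \<omega> =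
        - ((1 / real (card (C j))) *\<^sub>R (\<Sum>i\<in>C j. G i x0 (\<xi> i 0 0 0 \<omega>)))
        + (1 / real N) *\<^sub>R (\<Sum>j'<N. (1 / real (card (C j'))) *\<^sub>R (\<Sum>i\<in>C j'. G i x0 (\<xi> i 0 0 0 \<omega>)))"
    and xbar_init: "\<And>\<omega>. xbar 0 \<omega> = x0"
    and xg_0: "\<And>j tt \<omega>. j < N \<Longrightarrow> xg j tt 0 \<omega> = xbar tt \<omega>"
    and z_0: "\<And>j i tt \<omega>. j < N \<Longrightarrow> i \<in> C j \<Longrightarrow> z i tt 0 \<omega> =
        - G i (xbar tt \<omega>) (\<xi> i tt 0 0 \<omega>)
        + (1 / real (card (C j))) *\<^sub>R (\<Sum>i'\<in>C j. G i' (xbar tt \<omega>) (\<xi> i' tt 0 0 \<omega>))"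
    and x_0: "\<And>j i tt e \<omega>. j < N \<Longrightarrow> i \<in> C j \<Longrightarrow> e < E \<Longrightarrow> x i tt e 0 \<omega> = xg j tt e \<omega>"
    and x_step: "\<And>j i tt e h \<omega>. j < N \<Longrightarrow> i \<in> C j \<Longrightarrow> e < E \<Longrightarrow> h < H \<Longrightarrow>
        x i tt e (Suc h) \<omega> = x i tt e h \<omega>
          - \<gamma> *\<^sub>R (G i (x i tt e h \<omega>) (\<xi> i tt e h \<omega>) + z i tt e \<omega> + y j tt \<omega>)"
    and xg_step: "\<And>j tt e \<omega>. j < N \<Longrightarrow> e < E \<Longrightarrow>
        xg j tt (Suc e) \<omega> = (1 / real (card (C j))) *\<^sub>R (\<Sum>i\<in>C j. x i tt e H \<omega>)"
    and z_step: "\<And>j i tt e \<omega>. j < N \<Longrightarrow> i \<in> C j \<Longrightarrow> e < E \<Longrightarrow>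
        z i tt (Suc e) \<omega> = z i tt e \<omega> + (1 / (real H * \<gamma>)) *\<^sub>R (x i tt e H \<omega> - xg j tt (Suc e) \<omega>)"
    and xbar_step: "\<And>tt \<omega>. xbar (Suc tt) \<omega> = (1 / real N) *\<^sub>R (\<Sum>j<N. xg j tt E \<omega>)"
    and y_step: "\<And>j tt \<omega>. j < N \<Longrightarrow>
        y j (Suc tt) \<omega> = y j tt \<omega> + (1 / (real H * real E * \<gamma>)) *\<^sub>R (xg j tt E \<omega> - xbar (Suc tt) \<omega>)"
  shows "(\<Sum>e<E. ennreal (1 / real N) * (\<Sum>j<N.
            ennreal (1 / real (card (C j))) * (\<Sum>i\<in>C j.
              sqE M (\<lambda>\<omega>. z i t e \<omega> + gF i (xg j t e \<omega>)
                 - (1 / real (card (C j))) *\<^sub>R (\<Sum>i'\<in>C j. gF i' (xg j t e \<omega>))))))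
      \<le> ennreal (4 * L\<^sup>2) *
          (\<Sum>e<E. ennreal (1 / (real N * real H)) * (\<Sum>j<N.
             ennreal (1 / real (card (C j))) * (\<Sum>i\<in>C j. \<Sum>h<H.
               sqE M (\<lambda>\<omega>. xg j t e \<omega> - x i t e h \<omega>))))
        + ennreal (4 * L\<^sup>2) *
          (\<Sum>e<E. ennreal (1 / real N) * (\<Sum>j<N. sqE M (\<lambda>\<omega>. xg j t (Suc e) \<omega> - xg j t e \<omega>)))
        + ennreal (2 * (real E / real H) * \<sigma>\<^sup>2)
        + ennreal (\<sigma>\<^sup>2)"
  proof -
  interpret mtgc N C D G gF L \<sigma> \<gamma> E H M \<xi> x0 xbar y xg z x
    by (rule mtgc.intro[OF N_pos C_fin C_ne D_prob G_meas A1 A2_int A2_unb A2_var E_pos H_pos \<gamma>_pos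
        M_prob \<xi>_indep \<xi>_distr y_init xbar_init xg_0 z_0 x_0 x_step xg_step z_step xbar_step y_step])
  show ?thesis
    by (rule combine[where cc = "\<lambda>j. real (card (C j))"
        and Aq = "\<lambda>e j. \<Sum>i\<in>C j. sqE M (\<lambda>\<omega>. z i t e \<omega> + gF i (xg j t e \<omega>)
                 - (1 / real (card (C j))) *\<^sub>R (\<Sum>i'\<in>C j. gF i' (xg j t e \<omega>)))"
        and Qj = "\<lambda>e j. \<Sum>i\<in>C j. \<Sum>h<H. sqE M (\<lambda>\<omega>. xg j t e \<omega> - x i t e h \<omega>)"
        and Th = "\<lambda>e j. sqE M (\<lambda>\<omega>. xg j t (Suc e) \<omega> - xg j t e \<omega>)",
        OF N_pos E_pos H_pos card_pos step0 stepS])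
qed

end
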